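(* Let $T$ be an $n$-vertex tree with matching number $\beta$, where $n\geqslant 2\beta$. (i) If $\beta=1$, then $\xi^{ee}(T)=\xi^{ee}(S_n)=\frac{3n-3}{2}$. (ii) If $\beta=2$, then $\xi^{ee}(T)\leqslant\frac{5n-4}{6}$, with equality if and only if $T\cong P_2(a,b)$ for some $a,b$ with $a+b+2=n$. (iii) If $\beta\geqslant 3$, then $\xi^{ee}(T)\leqslant\frac{10n-3\beta-7}{12}$, with equality if and only if $T\cong T_{n,\beta}$.
   Context: For a vertex $x$ of a connected graph $G$, $\varepsilon_G(x)$ is its eccentricity and $d_G(x)$ its degree; $\xi^{ee}(G)=\sum_{uv\in E(G)}\left(\frac{1}{\varepsilon_G(u)}+\frac{1}{\varepsilon_G(v)}\right)=\sum_{x}\frac{d_G(x)}{\varepsilon_G(x)}$. The matching number is the maximum number of pairwise disjoint edges. $S_n$ is the star on $n$ vertices. $P_t(a,b)$ is the graph on $t+a+b$ vertices obtained from the path $P_t$ on $t$ vertices by attaching $a$ pendant vertices to one endvertex and $b$ pendant vertices to the other endvertex. $T_{n,\beta}$ is the tree obtained from the star $S_{n-\beta+1}$ by attaching one pendant edge to each of $\beta-1$ of its non-central vertices. *)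

theory Defs
  imports Complex_Main "HOL-Library.Disjoint_Sets"
begin

type_synonym 'a graph = "'a set \<times> 'a set set"

definition verts :: "'a graph \<Rightarrow> 'a set" where "verts G = fst G"
definition edges :: "'a graph \<Rightarrow> 'a set set" where "edges G = snd G"

definition simple_graph :: "'a graph \<Rightarrow> bool" where
  "simple_graph G \<longleftrightarrow> finite (verts G) \<and>
     (\<forall>e\<in>edges G. \<exists>u v. e = {u, v} \<and> u \<noteq> v \<and> u \<in> verts G \<and> v \<in> verts G)"

definition adj :: "'a graph \<Rightarrow> 'a \<Rightarrow> 'a \<Rightarrow> bool" where
  "adj G u v \<longleftrightarrow> u \<noteq> v \<and> {u, v} \<in> edges G"

definition walk :: "'a graph \<Rightarrow> 'a list \<Rightarrow> bool" where
  "walk G xs \<longleftrightarrow> xs \<noteq> [] \<and> set xs \<subseteq> verts G \<and>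
     (\<forall>i. Suc i < length xs \<longrightarrow> adj G (xs ! i) (xs ! Suc i))"

definition connected_graph :: "'a graph \<Rightarrow> bool" where
  "connected_graph G \<longleftrightarrow> verts G \<noteq> {} \<and>
     (\<forall>u\<in>verts G. \<forall>v\<in>verts G. \<exists>xs. walk G xs \<and> hd xs = u \<and> last xs = v)"

definition is_cycle :: "'a graph \<Rightarrow> 'a list \<Rightarrow> bool" where
  "is_cycle G xs \<longleftrightarrow> walk G xs \<and> distinct xs \<and> length xs \<ge> 3 \<and> adj G (last xs) (hd xs)"

definition tree :: "'a graph \<Rightarrow> bool" where
  "tree G \<longleftrightarrow> simple_graph G \<and> connected_graph G \<and> \<not> (\<exists>xs. is_cycle G xs)"

definition dist :: "'a graph \<Rightarrow> 'a \<Rightarrow> 'a \<Rightarrow> nat" where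
  "dist G u v = (LEAST k. \<exists>xs. walk G xs \<and> hd xs = u \<and> last xs = v \<and> length xs = Suc k)"

definition ecc :: "'a graph \<Rightarrow> 'a \<Rightarrow> nat" where
  "ecc G x = Max (dist G x ` verts G)"

definition degree :: "'a graph \<Rightarrow> 'a \<Rightarrow> nat" where
  "degree G x = card {e \<in> edges G. x \<in> e}"

definition xi_ee :: "'a graph \<Rightarrow> real" where
  "xi_ee G = (\<Sum>e\<in>edges G. \<Sum>x\<in>e. 1 / real (ecc G x))"

definition is_matching :: "'a graph \<Rightarrow> 'a set set \<Rightarrow> bool" where
  "is_matching G M \<longleftrightarrow> M \<subseteq> edges G \<and> disjoint M"

definition matching_number :: "'a graph \<Rightarrow> nat" where
  "matching_number G = Max (card ` {M. is_matching G M})"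

definition graph_iso :: "'a graph \<Rightarrow> 'b graph \<Rightarrow> bool" where
  "graph_iso G H \<longleftrightarrow> (\<exists>f. bij_betw f (verts G) (verts H) \<and>
     (\<forall>u\<in>verts G. \<forall>v\<in>verts G. {u, v} \<in> edges G \<longleftrightarrow> {f u, f v} \<in> edges H))"

definition star_graph :: "nat \<Rightarrow> nat graph" where
  "star_graph n = ({0..<n}, {{0, i} | i. 1 \<le> i \<and> i < n})"

text \<open>P_t(a,b): path 0,1,...,t-1; a pendant vertices t..t+a-1 attached to 0;
  b pendant vertices t+a..t+a+b-1 attached to t-1.\<close>
definition P_graph :: "nat \<Rightarrow> nat \<Rightarrow> nat \<Rightarrow> nat graph" where
  "P_graph t a b = ({0..<t+a+b},
     {{i, i+1} | i. i + 1 < t} \<union> {{0, t+j} | j. j < a} \<union> {{t-1, t+a+j} | j. j < b})"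

text \<open>T_{n,beta}: star S_{n-beta+1} on 0..n-beta (centre 0), with a pendant edge
  {i, n-beta+i} attached to each of the non-central vertices i = 1..beta-1.\<close>
definition T_graph :: "nat \<Rightarrow> nat \<Rightarrow> nat graph" where
  "T_graph n \<beta> = ({0..<n},
     {{0, i} | i. 1 \<le> i \<and> i \<le> n - \<beta>} \<union> {{i, n - \<beta> + i} | i. 1 \<le> i \<and> i < \<beta>})"

end

theory Submission
  imports Defs
begin


lemma adj_sym: "adj G u v \<longleftrightarrow> adj G v u"
  unfolding adj_def by (auto simp: insert_commute)

lemma walk_single[simp]: "walk G [x] \<longleftrightarrow> x \<in> verts G"
  unfolding walk_def by auto

lemma walk_Cons2[simp]: "walk G (x#y#xs) \<longleftrightarrow> x \<in> verts G \<and> adj G x y \<and> walk G (y#xs)"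
proof
  assume w: "walk G (x#y#xs)"
  have "\<forall>i. Suc i < length (y#xs) \<longrightarrow> adj G ((y#xs)!i) ((y#xs)!Suc i)"
  proof (intro allI impI)
    fix i assume "Suc i < length (y#xs)"
    then have "Suc (Suc i) < length (x#y#xs)" by simp
    with w show "adj G ((y#xs)!i) ((y#xs)!Suc i)" unfolding walk_def by fastforce
  qed
  moreover have "adj G x y" using w unfolding walk_def by fastforce
  ultimately show "x \<in> verts G \<and> adj G x y \<and> walk G (y#xs)" using w unfolding walk_def by auto
next
  assume a: "x \<in> verts G \<and> adj G x y \<and> walk G (y#xs)"
  show "walk G (x#y#xs)" unfolding walk_def
  proof (intro conjI allI impI)
    show "set (x # y # xs) \<subseteq> verts G" using a unfolding walk_def by auto
  next
    fix i assume i: "Suc i < length (x#y#xs)"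
    show "adj G ((x#y#xs)!i) ((x#y#xs)!Suc i)"
    proof (cases i)
      case 0 then show ?thesis using a by simp
    next
      case (Suc j) then show ?thesis using a i unfolding walk_def by auto
    qed
  qed simp
qed

lemma walk_Cons_hd: "walk G (x#xs) \<Longrightarrow> xs \<noteq> [] \<Longrightarrow> adj G x (hd xs) \<and> walk G xs"
  by (cases xs) auto

lemma walk_append:
  "xs \<noteq> [] \<Longrightarrow> ys \<noteq> [] \<Longrightarrow> walk G (xs @ ys) \<longleftrightarrow> walk G xs \<and> walk G ys \<and> adj G (last xs) (hd ys)"
proof (induction xs rule: list_nonempty_induct)
  case (single x)
  then show ?case by (cases ys) auto
next
  case (cons x xs)
  then show ?case by (cases xs) auto
qed

lemma walk_verts: "walk G xs \<Longrightarrow> set xs \<subseteq> verts G"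
  unfolding walk_def by auto

lemma walk_drop: "walk G xs \<Longrightarrow> i < length xs \<Longrightarrow> walk G (drop i xs)"
proof (induction i arbitrary: xs)
  case 0 then show ?case by simp
next
  case (Suc i)
  then obtain x ys where xs: "xs = x # ys" by (cases xs) auto
  with Suc.prems have "ys \<noteq> []" by auto
  with Suc.prems xs have "walk G ys" using walk_Cons_hd[of G x ys] by simp
  then show ?case using Suc xs by simp
qed

lemma walk_potential:
  assumes h: "\<And>x y. adj G x y \<Longrightarrow> h y \<le> h x + (1::nat)"
  shows "walk G xs \<Longrightarrow> h (last xs) \<le> h (hd xs) + (length xs - 1)"
proof (induction xs)
  case Nil then show ?case unfolding walk_def by simp
next
  case (Cons x xs)
  show ?case
  proof (cases xs)
    case Nil then show ?thesis by simp
  next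
    case (Cons y zs)
    with Cons.prems have "adj G x y" "walk G xs" by auto
    then have "h y \<le> h x + 1" "h (last xs) \<le> h (hd xs) + (length xs - 1)" using h Cons.IH by auto
    then show ?thesis using Cons by simp
  qed
qed

lemma dist_le:
  assumes "walk G xs" "hd xs = u" "last xs = v"
  shows "dist G u v \<le> length xs - 1"
proof -
  have "xs \<noteq> []" using assms unfolding walk_def by auto
  then have "length xs = Suc (length xs - 1)" by simp
  then show ?thesis unfolding dist_def using assms by (intro Least_le) blast
qed

lemma dist_walk:
  assumes "\<exists>xs. walk G xs \<and> hd xs = u \<and> last xs = v"
  shows "\<exists>xs. walk G xs \<and> hd xs = u \<and> last xs = v \<and> length xs = Suc (dist G u v)"
proof -
  from assms obtain xs where xs: "walk G xs" "hd xs = u" "last xs = v" by blast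
  then have "xs \<noteq> []" unfolding walk_def by auto
  then have "length xs = Suc (length xs - 1)" by simp
  with xs have "\<exists>k xs. walk G xs \<and> hd xs = u \<and> last xs = v \<and> length xs = Suc k" by blast
  then show ?thesis unfolding dist_def by (rule LeastI_ex)
qed

lemma dist_potential:
  assumes "\<exists>xs. walk G xs \<and> hd xs = u \<and> last xs = v"
    and h: "\<And>x y. adj G x y \<Longrightarrow> h y \<le> h x + (1::nat)"
  shows "h v \<le> h u + dist G u v"
proof -
  obtain xs where xs: "walk G xs" "hd xs = u" "last xs = v" "length xs = Suc (dist G u v)"
    using dist_walk[OF assms(1)] by blast
  show ?thesis using walk_potential[OF h xs(1)] xs by simp
qed

lemma dist_self: "u \<in> verts G \<Longrightarrow> dist G u u = 0"
  using dist_le[of G "[u]" u u] by simp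

lemma dist_adj: "adj G u v \<Longrightarrow> u \<in> verts G \<Longrightarrow> v \<in> verts G \<Longrightarrow> dist G u v \<le> 1"
  using dist_le[of G "[u,v]" u v] by simp

lemma dist_0:
  assumes "\<exists>xs. walk G xs \<and> hd xs = u \<and> last xs = v" "dist G u v = 0"
  shows "u = v"
proof -
  obtain xs where xs: "walk G xs" "hd xs = u" "last xs = v" "length xs = Suc (dist G u v)"
    using dist_walk[OF assms(1)] by blast
  with assms(2) obtain x where "xs = [x]" by (cases xs) auto
  with xs show ?thesis by simp
qed

lemma dist_1:
  assumes "\<exists>xs. walk G xs \<and> hd xs = u \<and> last xs = v" "dist G u v = 1"
  shows "adj G u v"
proof -
  obtain xs where xs: "walk G xs" "hd xs = u" "last xs = v" "length xs = Suc (dist G u v)"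
    using dist_walk[OF assms(1)] by blast
  with assms(2) obtain x y where "xs = [x,y]"
    by (cases xs; cases "tl xs") auto
  with xs show ?thesis by simp
qed

lemma dist_2:
  assumes "\<exists>xs. walk G xs \<and> hd xs = u \<and> last xs = v" "dist G u v = 2"
  shows "\<exists>w. adj G u w \<and> adj G w v"
proof -
  obtain xs where xs: "walk G xs" "hd xs = u" "last xs = v" "length xs = Suc (dist G u v)"
    using dist_walk[OF assms(1)] by blast
  with assms(2) have "length xs = 3" by simp
  then obtain x y z where "xs = [x,y,z]"
    by (cases xs; cases "tl xs"; cases "tl (tl xs)") auto
  with xs show ?thesis by auto
qed

lemma conn_walk: "connected_graph G \<Longrightarrow> u \<in> verts G \<Longrightarrow> v \<in> verts G \<Longrightarrow>
   \<exists>xs. walk G xs \<and> hd xs = u \<and> last xs = v"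
  unfolding connected_graph_def by blast

lemma ecc_ge: "finite (verts G) \<Longrightarrow> y \<in> verts G \<Longrightarrow> dist G x y \<le> ecc G x"
  unfolding ecc_def by (rule Max_ge) auto

lemma ecc_le: "finite (verts G) \<Longrightarrow> verts G \<noteq> {} \<Longrightarrow> (\<And>y. y \<in> verts G \<Longrightarrow> dist G x y \<le> k) \<Longrightarrow> ecc G x \<le> k"
  unfolding ecc_def by (subst Max_le_iff) auto

lemma ecc_attained: "finite (verts G) \<Longrightarrow> verts G \<noteq> {} \<Longrightarrow> \<exists>y\<in>verts G. dist G x y = ecc G x"
proof -
  assume "finite (verts G)" "verts G \<noteq> {}"
  then have "Max (dist G x ` verts G) \<in> dist G x ` verts G" by (intro Max_in) auto
  then show ?thesis unfolding ecc_def by auto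
qed

lemma ecc_eqI: "finite (verts G) \<Longrightarrow> (\<And>y. y \<in> verts G \<Longrightarrow> dist G x y \<le> k) \<Longrightarrow> y0 \<in> verts G
   \<Longrightarrow> k \<le> dist G x y0 \<Longrightarrow> ecc G x = k"
proof -
  assume a: "finite (verts G)" "\<And>y. y \<in> verts G \<Longrightarrow> dist G x y \<le> k" "y0 \<in> verts G" "k \<le> dist G x y0"
  have "ecc G x \<le> k" using a by (intro ecc_le) auto
  moreover have "dist G x y0 \<le> ecc G x" using a by (intro ecc_ge)
  ultimately show ?thesis using a by linarith
qed



lemma simple_edges_finite: "simple_graph G \<Longrightarrow> finite (edges G)"
proof -
  assume s: "simple_graph G"
  have "edges G \<subseteq> Pow (verts G)"
  proof
    fix e assume "e \<in> edges G"
    then obtain u v where "e = {u,v}" "u \<in> verts G" "v \<in> verts G" using s unfolding simple_graph_def by blast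
    then show "e \<in> Pow (verts G)" by simp
  qed
  moreover have "finite (Pow (verts G))" using s unfolding simple_graph_def by simp
  ultimately show ?thesis by (rule finite_subset)
qed

lemma simple_edge: "simple_graph G \<Longrightarrow> e \<in> edges G \<Longrightarrow> \<exists>u v. e = {u,v} \<and> u \<noteq> v \<and> u \<in> verts G \<and> v \<in> verts G"
  unfolding simple_graph_def by blast

lemma simple_edge_card: "simple_graph G \<Longrightarrow> e \<in> edges G \<Longrightarrow> card e = 2"
proof -
  assume "simple_graph G" "e \<in> edges G"
  then obtain u v where "e = {u,v}" "u \<noteq> v" using simple_edge[of G e] by blast
  then show ?thesis by simp
qed

lemma adj_verts: "simple_graph G \<Longrightarrow> adj G u v \<Longrightarrow> u \<in> verts G \<and> v \<in> verts G"
proof -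
  assume s: "simple_graph G" and a: "adj G u v"
  have "{u,v} \<in> edges G" using a unfolding adj_def by simp
  then obtain x y where xy: "{u,v} = {x,y}" "x \<in> verts G" "y \<in> verts G" using simple_edge[OF s] by blast
  have "u \<in> {x,y}" "v \<in> {x,y}" using xy(1) by (metis insertI1, metis insertI1 insert_commute)
  then show ?thesis using xy by blast
qed

lemma matchings_finite: "simple_graph G \<Longrightarrow> finite {M. is_matching G M}"
proof -
  assume "simple_graph G"
  then have "finite (Pow (edges G))" using simple_edges_finite[of G] by simp
  moreover have "{M. is_matching G M} \<subseteq> Pow (edges G)" unfolding is_matching_def by blast
  ultimately show ?thesis by (rule finite_subset[rotated])
qed

lemma matching_ge: "simple_graph G \<Longrightarrow> is_matching G M \<Longrightarrow> card M \<le> matching_number G"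
proof -
  assume s: "simple_graph G" and M: "is_matching G M"
  have "finite (card ` {M. is_matching G M})" using matchings_finite[OF s] by (rule finite_imageI)
  moreover have "card M \<in> card ` {M. is_matching G M}" using M by blast
  ultimately show ?thesis unfolding matching_number_def by (rule Max_ge)
qed

lemma matching_cover:
  assumes s: "simple_graph G" and S: "finite S" and cov: "\<And>e. e \<in> edges G \<Longrightarrow> e \<inter> S \<noteq> {}"
  shows "matching_number G \<le> card S"
proof -
  have "is_matching G {}" unfolding is_matching_def by simp
  then have ne: "card ` {M. is_matching G M} \<noteq> {}" by blast
  have "card M \<le> card S" if M: "is_matching G M" for M
  proof -
    define g where "g e = (SOME s. s \<in> e \<inter> S)" for e :: "'a set"
    have gin: "g e \<in> e \<inter> S" if "e \<in> M" for e
    proof -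
      have "e \<in> edges G" using M that unfolding is_matching_def by auto
      then have "\<exists>s. s \<in> e \<inter> S" using cov by blast
      then show ?thesis unfolding g_def by (rule someI_ex)
    qed
    have "inj_on g M"
    proof (rule inj_onI)
      fix e1 e2 assume e: "e1 \<in> M" "e2 \<in> M" "g e1 = g e2"
      show "e1 = e2"
      proof (rule ccontr)
        assume "e1 \<noteq> e2"
        then have "disjnt e1 e2" using M e unfolding is_matching_def pairwise_def by blast
        moreover have "g e1 \<in> e1" "g e1 \<in> e2" using gin[of e1] gin[of e2] e(1,2) e(3) by simp_all
        ultimately show False unfolding disjnt_def by blast
      qed
    qed
    moreover have "g ` M \<subseteq> S" using gin by auto
    ultimately show ?thesis using S card_inj_on_le by blast
  qed
  then show ?thesis unfolding matching_number_def using matchings_finite[OF s] ne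
    by (subst Max_le_iff) auto
qed

lemma matching_two:
  assumes s: "simple_graph G" and e: "e1 \<in> edges G" "e2 \<in> edges G" "e1 \<inter> e2 = {}" "e1 \<noteq> {}"
  shows "2 \<le> matching_number G"
proof -
  have ne: "e1 \<noteq> e2" using e by auto
  have "is_matching G {e1, e2}" unfolding is_matching_def pairwise_def disjnt_def
    using e by (auto simp: Int_commute)
  then have "card {e1,e2} \<le> matching_number G" by (rule matching_ge[OF s])
  then show ?thesis using ne by simp
qed

lemma walk_mono: "verts G' \<subseteq> verts G \<Longrightarrow> edges G' \<subseteq> edges G \<Longrightarrow> walk G' ys \<Longrightarrow> walk G ys"
  unfolding walk_def adj_def by blast

lemma forest_edges:
  assumes "simple_graph G" "\<not>(\<exists>xs. is_cycle G xs)" "verts G \<noteq> {}"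
  shows "card (edges G) + 1 \<le> card (verts G)"
  using assms
proof (induction "card (verts G)" arbitrary: G rule: less_induct)
  case less
  note s = less.prems(1) and acyc = less.prems(2) and ne = less.prems(3)
  have finV: "finite (verts G)" using s unfolding simple_graph_def by simp
  show ?case
  proof (cases "edges G = {}")
    case True
    then show ?thesis using finV ne by (simp add: Suc_leI card_gt_0_iff)
  next
    case False
    then obtain e where "e \<in> edges G" by blast
    then obtain a b where ab: "{a,b} \<in> edges G" "a \<noteq> b" "a \<in> verts G" "b \<in> verts G"
      using simple_edge[OF s] by blast
    have bound: "length ys \<le> card (verts G)" if "walk G ys \<and> distinct ys" for ys
    proof -
      have "card (set ys) \<le> card (verts G)" using that finV by (intro card_mono) (auto simp: walk_def)
      then show ?thesis using that distinct_card by metis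
    qed
    define Q where "Q n = (\<exists>ys. walk G ys \<and> distinct ys \<and> length ys = n)" for n
    have Q2: "Q 2" unfolding Q_def
      by (rule exI[of _ "[a,b]"]) (use ab in \<open>auto simp: adj_def\<close>)
    have "\<forall>n. Q n \<longrightarrow> n \<le> card (verts G)" unfolding Q_def using bound by blast
    from Nat.ex_has_greatest_nat[OF Q2 this] obtain m where m: "Q m" "\<And>n. Q n \<Longrightarrow> n \<le> m" by blast
    then obtain xs where xs: "walk G xs" "distinct xs" "length xs = m" unfolding Q_def by blast
    have m2: "m \<ge> 2" using m(2)[OF Q2] .
    have maxp: "length ys \<le> length xs" if "walk G ys" "distinct ys" for ys
      using m(2)[of "length ys"] that xs unfolding Q_def by blast
    define v where "v = last xs"
    define u where "u = xs ! (m - 2)"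
    have xsne: "xs \<noteq> []" using xs m2 by auto
    have vnth: "v = xs ! (m - 1)" unfolding v_def using xs xsne by (simp add: last_conv_nth)
    have uv: "adj G u v"
    proof -
      have "Suc (m - 2) < length xs" using xs m2 by simp
      then have "adj G (xs ! (m-2)) (xs ! Suc (m-2))" using xs(1) unfolding walk_def by blast
      moreover have "Suc (m-2) = m - 1" using m2 by simp
      ultimately show ?thesis unfolding u_def vnth by simp
    qed
    have uvE: "{u,v} \<in> edges G" using uv unfolding adj_def by simp
    have uV: "u \<in> verts G" and vV: "v \<in> verts G" using adj_verts[OF s uv] by auto
    have leaf: "e = {u,v}" if e: "e \<in> edges G" "v \<in> e" for e
    proof -
      obtain x y where xy: "e = {x,y}" "x \<noteq> y" "x \<in> verts G" "y \<in> verts G" using simple_edge[OF s e(1)] by blast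
      then obtain w where w: "e = {v,w}" "w \<noteq> v" "w \<in> verts G" using e(2) by (auto simp: insert_commute)
      have vw: "adj G v w" using w e unfolding adj_def by auto
      show ?thesis
      proof (rule ccontr)
        assume "e \<noteq> {u,v}"
        then have wu: "w \<noteq> u" using w by auto
        show False
        proof (cases "w \<in> set xs")
          case False
          have "walk G (xs @ [w])" using walk_append[OF xsne, of "[w]" G] xs w vw unfolding v_def by simp
          moreover have "distinct (xs @ [w])" using xs False by simp
          ultimately have "length (xs @ [w]) \<le> length xs" by (rule maxp)
          then show False by simp
        next
          case True
          then obtain j where j: "j < m" "xs ! j = w" using xs by (auto simp: in_set_conv_nth)
          have "j \<noteq> m - 1" using j w vnth by auto
          moreover have "j \<noteq> m - 2" using j wu u_def by auto
          ultimately have jm: "j + 3 \<le> m" using j m2 by linarith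
          let ?c = "drop j xs"
          have "walk G ?c" using walk_drop[OF xs(1)] xs(3) j by simp
          moreover have "distinct ?c" using xs by simp
          moreover have "length ?c \<ge> 3" using xs jm by simp
          moreover have "last ?c = v" unfolding v_def using j xs by simp
          moreover have "hd ?c = w" using j xs by (simp add: hd_drop_conv_nth)
          ultimately have "is_cycle G ?c" unfolding is_cycle_def using vw by simp
          then show False using acyc by blast
        qed
      qed
    qed
    define G' where "G' = (verts G - {v}, edges G - {{u,v}})"
    have V': "verts G' = verts G - {v}" and E': "edges G' = edges G - {{u,v}}"
      unfolding G'_def verts_def edges_def by auto
    have s': "simple_graph G'"
      unfolding simple_graph_def
    proof (intro conjI ballI)
      show "finite (verts G')" using finV V' by simp
    next
      fix e assume e: "e \<in> edges G'"
      then have eE: "e \<in> edges G" and neq: "e \<noteq> {u,v}" using E' by auto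
      have "v \<notin> e" using leaf eE neq by blast
      then show "\<exists>x y. e = {x, y} \<and> x \<noteq> y \<and> x \<in> verts G' \<and> y \<in> verts G'"
        using simple_edge[OF s eE] V' by auto
    qed
    have acyc': "\<not>(\<exists>xs. is_cycle G' xs)"
    proof
      assume "\<exists>xs. is_cycle G' xs"
      then obtain ys where ys: "is_cycle G' ys" by blast
      have "walk G ys" using walk_mono[of G' G ys] ys V' E' unfolding is_cycle_def by auto
      moreover have "adj G (last ys) (hd ys)" using ys E' unfolding is_cycle_def adj_def by auto
      ultimately have "is_cycle G ys" using ys unfolding is_cycle_def by auto
      then show False using acyc by blast
    qed
    have uv': "u \<noteq> v" using uv unfolding adj_def by simp
    have ne': "verts G' \<noteq> {}" using V' uV uv' by auto
    have cardV: "card (verts G') = card (verts G) - 1" using V' vV finV by simp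
    have "card (verts G) > 0" using vV finV card_gt_0_iff by blast
    then have lt: "card (verts G') < card (verts G)" using cardV by linarith
    have IH: "card (edges G') + 1 \<le> card (verts G')" using less.hyps[OF lt s' acyc' ne'] .
    have "card (edges G') = card (edges G) - 1" using E' uvE by simp
    moreover have "card (edges G) \<ge> 1" using uvE simple_edges_finite[OF s] card_gt_0_iff[of "edges G"] by (metis One_nat_def Suc_leI empty_iff)
    ultimately show ?thesis using IH cardV by linarith
  qed
qed

lemma tree_simple: "tree G \<Longrightarrow> simple_graph G" unfolding tree_def by simp

lemma tree_no3:
  assumes t: "tree G" and a: "adj G a b" "adj G b c" "adj G c a"
  shows False
proof -
  have s: "simple_graph G" using t unfolding tree_def by simp
  have V: "a \<in> verts G" "b \<in> verts G" "c \<in> verts G" using adj_verts[OF s] a by auto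
  have "is_cycle G [a,b,c]" unfolding is_cycle_def using a V by (auto simp: adj_def)
  then show False using t unfolding tree_def by blast
qed

lemma tree_no4:
  assumes t: "tree G" and a: "adj G a b" "adj G b c" "adj G c d" "adj G d a" "a \<noteq> c" "b \<noteq> d"
  shows False
proof -
  have s: "simple_graph G" using t unfolding tree_def by simp
  have V: "a \<in> verts G" "b \<in> verts G" "c \<in> verts G" "d \<in> verts G" using adj_verts[OF s] a by auto
  have "is_cycle G [a,b,c,d]" unfolding is_cycle_def using a V by (auto simp: adj_def)
  then show False using t unfolding tree_def by blast
qed

lemma tree_no5:
  assumes t: "tree G" and a: "adj G a b" "adj G b c" "adj G c d" "adj G d e" "adj G e a" "distinct [a,b,c,d,e]"
  shows False
proof -
  have s: "simple_graph G" using t unfolding tree_def by simp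
  have V: "a \<in> verts G" "b \<in> verts G" "c \<in> verts G" "d \<in> verts G" "e \<in> verts G" using adj_verts[OF s] a by auto
  have "is_cycle G [a,b,c,d,e]" unfolding is_cycle_def using a V by (auto simp: adj_def)
  then show False using t unfolding tree_def by blast
qed



lemma iso_xi:
  assumes sG: "simple_graph G" and sH: "simple_graph H" and iso: "graph_iso G H"
  shows "xi_ee H = xi_ee G"
proof -
  obtain f where bij: "bij_betw f (verts G) (verts H)"
    and eq: "\<And>u v. u \<in> verts G \<Longrightarrow> v \<in> verts G \<Longrightarrow> {u,v} \<in> edges G \<longleftrightarrow> {f u, f v} \<in> edges H"
    using iso unfolding graph_iso_def by blast
  define g where "g = inv_into (verts G) f"
  have inj: "inj_on f (verts G)" and im: "f ` verts G = verts H" using bij unfolding bij_betw_def by auto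
  have gf: "g (f u) = u" if "u \<in> verts G" for u unfolding g_def using inj that by simp
  have fg: "f (g a) = a" if "a \<in> verts H" for a unfolding g_def using im that f_inv_into_f by metis
  have gV: "g a \<in> verts G" if "a \<in> verts H" for a unfolding g_def using im that inv_into_into by metis
  have fV: "f u \<in> verts H" if "u \<in> verts G" for u using im that by blast
  have adjf: "adj H (f u) (f v) \<longleftrightarrow> adj G u v" if "u \<in> verts G" "v \<in> verts G" for u v
  proof -
    have "f u = f v \<longleftrightarrow> u = v" using inj that inj_on_eq_iff by metis
    then show ?thesis unfolding adj_def using eq[OF that] by blast
  qed
  have walkf: "walk H (map f xs)" if w: "walk G xs" for xs
    unfolding walk_def
  proof (intro conjI allI impI)
    show "map f xs \<noteq> []" using w unfolding walk_def by simp
    show "set (map f xs) \<subseteq> verts H" using w fV unfolding walk_def by auto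
  next
    fix i assume i: "Suc i < length (map f xs)"
    then have "adj G (xs ! i) (xs ! Suc i)" using w unfolding walk_def by simp
    moreover have "xs ! i \<in> verts G" "xs ! Suc i \<in> verts G" using w i unfolding walk_def by auto
    ultimately show "adj H (map f xs ! i) (map f xs ! Suc i)" using adjf i by simp
  qed
  have walkg: "walk G (map g ys)" if w: "walk H ys" for ys
    unfolding walk_def
  proof (intro conjI allI impI)
    show "map g ys \<noteq> []" using w unfolding walk_def by simp
    show "set (map g ys) \<subseteq> verts G" using w gV unfolding walk_def by auto
  next
    fix i assume i: "Suc i < length (map g ys)"
    then have a: "adj H (ys ! i) (ys ! Suc i)" using w unfolding walk_def by simp
    have V: "ys ! i \<in> verts H" "ys ! Suc i \<in> verts H" using w i unfolding walk_def by auto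
    have "adj H (f (g (ys ! i))) (f (g (ys ! Suc i)))" using a fg V by simp
    then have "adj G (g (ys ! i)) (g (ys ! Suc i))" using adjf gV V by blast
    then show "adj G (map g ys ! i) (map g ys ! Suc i)" using i by simp
  qed
  have distf: "dist H (f u) (f v) = dist G u v" if uv: "u \<in> verts G" "v \<in> verts G" for u v
  proof -
    have "(\<exists>xs. walk G xs \<and> hd xs = u \<and> last xs = v \<and> length xs = Suc k) \<longleftrightarrow>
          (\<exists>ys. walk H ys \<and> hd ys = f u \<and> last ys = f v \<and> length ys = Suc k)" for k
    proof
      assume "\<exists>xs. walk G xs \<and> hd xs = u \<and> last xs = v \<and> length xs = Suc k"
      then obtain xs where xs: "walk G xs" "hd xs = u" "last xs = v" "length xs = Suc k" by blast
      then have "xs \<noteq> []" by auto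
      then show "\<exists>ys. walk H ys \<and> hd ys = f u \<and> last ys = f v \<and> length ys = Suc k"
        using xs walkf[OF xs(1)] by (intro exI[of _ "map f xs"]) (simp add: hd_map last_map)
    next
      assume "\<exists>ys. walk H ys \<and> hd ys = f u \<and> last ys = f v \<and> length ys = Suc k"
      then obtain ys where ys: "walk H ys" "hd ys = f u" "last ys = f v" "length ys = Suc k" by blast
      then have "ys \<noteq> []" by auto
      then show "\<exists>xs. walk G xs \<and> hd xs = u \<and> last xs = v \<and> length xs = Suc k"
        using ys walkg[OF ys(1)] gf uv by (intro exI[of _ "map g ys"]) (simp add: hd_map last_map)
    qed
    then show ?thesis unfolding dist_def by simp
  qed
  have eccf: "ecc H (f u) = ecc G u" if u: "u \<in> verts G" for u
  proof -
    have "dist H (f u) ` verts H = dist H (f u) ` f ` verts G" using im by simp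
    also have "\<dots> = (\<lambda>y. dist H (f u) (f y)) ` verts G" by (simp add: image_image)
    also have "\<dots> = dist G u ` verts G" using distf u by (intro image_cong) auto
    finally show ?thesis unfolding ecc_def by simp
  qed
  have EH: "edges H = (\<lambda>e. f ` e) ` edges G"
  proof
    show "edges H \<subseteq> (\<lambda>e. f ` e) ` edges G"
    proof
      fix e assume e: "e \<in> edges H"
      then obtain a b where ab: "e = {a,b}" "a \<in> verts H" "b \<in> verts H" using simple_edge[OF sH] by blast
      have "{f (g a), f (g b)} \<in> edges H" using e ab fg by simp
      then have "{g a, g b} \<in> edges G" using eq gV ab by blast
      moreover have "e = f ` {g a, g b}" using ab fg by simp
      ultimately show "e \<in> (\<lambda>e. f ` e) ` edges G" by blast
    qed
  next
    show "(\<lambda>e. f ` e) ` edges G \<subseteq> edges H"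
    proof
      fix e' assume "e' \<in> (\<lambda>e. f ` e) ` edges G"
      then obtain e where e: "e \<in> edges G" "e' = f ` e" by blast
      then obtain u v where uv: "e = {u,v}" "u \<in> verts G" "v \<in> verts G" using simple_edge[OF sG] by blast
      then show "e' \<in> edges H" using eq e by simp
    qed
  qed
  have esub: "e \<subseteq> verts G" if "e \<in> edges G" for e using simple_edge[OF sG that] by auto
  have injE: "inj_on (\<lambda>e. f ` e) (edges G)"
    by (rule inj_onI) (use inj_on_image_eq_iff[OF inj] esub in blast)
  have "xi_ee H = (\<Sum>e\<in>edges G. \<Sum>x\<in>f ` e. 1 / real (ecc H x))"
    unfolding xi_ee_def EH by (rule sum.reindex[OF injE, unfolded comp_def])
  also have "\<dots> = (\<Sum>e\<in>edges G. \<Sum>x\<in>e. 1 / real (ecc G x))"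
  proof (rule sum.cong[OF refl])
    fix e assume e: "e \<in> edges G"
    have ie: "inj_on f e" using inj esub[OF e] inj_on_subset by blast
    have "(\<Sum>x\<in>f ` e. 1 / real (ecc H x)) = (\<Sum>x\<in>e. 1 / real (ecc H (f x)))"
      by (rule sum.reindex[OF ie, unfolded comp_def])
    also have "\<dots> = (\<Sum>x\<in>e. 1 / real (ecc G x))" using eccf esub[OF e] by (intro sum.cong) auto
    finally show "(\<Sum>x\<in>f ` e. 1 / real (ecc H x)) = (\<Sum>x\<in>e. 1 / real (ecc G x))" .
  qed
  finally show ?thesis unfolding xi_ee_def .
qed



locale dstar =
  fixes G :: "'a graph" and c :: 'a and N1 N2 :: "'a set" and p :: "'a \<Rightarrow> 'a"
  assumes finV: "finite (verts G)"
  and V: "verts G = insert c (N1 \<union> N2)"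
  and cN1: "c \<notin> N1" and cN2: "c \<notin> N2" and disj: "N1 \<inter> N2 = {}"
  and pN1: "\<And>v. v \<in> N2 \<Longrightarrow> p v \<in> N1"
  and E: "edges G = (\<lambda>x. {c,x}) ` N1 \<union> (\<lambda>v. {p v, v}) ` N2"
begin

lemma fin1: "finite N1" using finV V by simp
lemma fin2: "finite N2" using finV V by simp

lemma inE1: "{u,v} \<in> (\<lambda>x. {c,x}) ` N1 \<longleftrightarrow> (u = c \<and> v \<in> N1) \<or> (v = c \<and> u \<in> N1)"
proof
  assume "{u,v} \<in> (\<lambda>x. {c,x}) ` N1"
  then obtain x where x: "x \<in> N1" "{u,v} = {c,x}" by blast
  then have "(u = c \<and> v = x) \<or> (u = x \<and> v = c)" by (simp add: doubleton_eq_iff)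
  then show "(u = c \<and> v \<in> N1) \<or> (v = c \<and> u \<in> N1)" using x by blast
next
  assume "(u = c \<and> v \<in> N1) \<or> (v = c \<and> u \<in> N1)"
  then show "{u,v} \<in> (\<lambda>x. {c,x}) ` N1"
  proof
    assume a: "u = c \<and> v \<in> N1"
    then show ?thesis using a by (intro image_eqI[where x=v]) auto
  next
    assume a: "v = c \<and> u \<in> N1"
    then have "{u,v} = (\<lambda>x. {c,x}) u" by (simp add: insert_commute)
    then show ?thesis using a by (intro image_eqI[where x=u]) auto
  qed
qed

lemma inE2: "{u,v} \<in> (\<lambda>v. {p v, v}) ` N2 \<longleftrightarrow> (v \<in> N2 \<and> u = p v) \<or> (u \<in> N2 \<and> v = p u)"
proof
  assume "{u,v} \<in> (\<lambda>v. {p v, v}) ` N2"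
  then obtain w where w: "w \<in> N2" "{u,v} = {p w, w}" by blast
  then have "(u = p w \<and> v = w) \<or> (u = w \<and> v = p w)" by (simp add: doubleton_eq_iff)
  then show "(v \<in> N2 \<and> u = p v) \<or> (u \<in> N2 \<and> v = p u)"
  proof
    assume "u = p w \<and> v = w" then show ?thesis using w(1) by simp
  next
    assume "u = w \<and> v = p w" then show ?thesis using w(1) by simp
  qed
next
  assume "(v \<in> N2 \<and> u = p v) \<or> (u \<in> N2 \<and> v = p u)"
  then show "{u,v} \<in> (\<lambda>v. {p v, v}) ` N2"
  proof
    assume a: "v \<in> N2 \<and> u = p v"
    then show ?thesis using a by (intro image_eqI[where x=v]) auto
  next
    assume a: "u \<in> N2 \<and> v = p u"
    then have "{u,v} = (\<lambda>v. {p v, v}) u" by (simp add: insert_commute)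
    then show ?thesis using a by (intro image_eqI[where x=u]) auto
  qed
qed

lemma edge_iff: "{u,v} \<in> edges G \<longleftrightarrow> (u = c \<and> v \<in> N1) \<or> (v = c \<and> u \<in> N1) \<or> (v \<in> N2 \<and> u = p v) \<or> (u \<in> N2 \<and> v = p u)"
  by (simp only: E Un_iff inE1 inE2 disj_assoc)

lemma p_neq: "w \<in> N2 \<Longrightarrow> p w \<noteq> w"
proof
  assume w: "w \<in> N2" and "p w = w" then have "w \<in> N1 \<inter> N2" using pN1[OF w] by simp
  then show False using disj by simp
qed

lemma adj_iff: "adj G u v \<longleftrightarrow> (u = c \<and> v \<in> N1) \<or> (v = c \<and> u \<in> N1) \<or> (v \<in> N2 \<and> u = p v) \<or> (u \<in> N2 \<and> v = p u)"
  (is "_ \<longleftrightarrow> ?R")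
proof -
  have B: "u \<noteq> v" if H: ?R
    using H cN1 p_neq[of u] p_neq[of v] by auto
  show ?thesis
  proof
    assume "adj G u v" then show ?R using edge_iff unfolding adj_def by simp
  next
    assume H: ?R then show "adj G u v" using edge_iff B[OF H] unfolding adj_def by simp
  qed
qed

lemma edge_adj: "{u,v} \<in> edges G \<longleftrightarrow> adj G u v"
  by (simp only: edge_iff adj_iff)

lemma simple: "simple_graph G"
  unfolding simple_graph_def
proof (intro conjI ballI)
  show "finite (verts G)" by (rule finV)
next
  fix e assume e: "e \<in> edges G"
  show "\<exists>u v. e = {u, v} \<and> u \<noteq> v \<and> u \<in> verts G \<and> v \<in> verts G"
  proof (cases "e \<in> (\<lambda>x. {c,x}) ` N1")
    case True
    then obtain x where x: "x \<in> N1" "e = {c,x}" by auto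
    then show ?thesis using cN1 V by (intro exI[of _ c] exI[of _ x]) auto
  next
    case False
    then obtain w where w: "w \<in> N2" "e = {p w, w}" using e E by auto
    then show ?thesis using pN1[OF w(1)] p_neq[OF w(1)] V by (intro exI[of _ "p w"] exI[of _ w]) auto
  qed
qed

lemma cV: "c \<in> verts G" using V by simp
lemma N1V: "x \<in> N1 \<Longrightarrow> x \<in> verts G" using V by simp
lemma N2V: "x \<in> N2 \<Longrightarrow> x \<in> verts G" using V by simp

lemma walkI2: "adj G a b \<Longrightarrow> walk G [a,b]"
  using adj_verts[OF simple] by auto
lemma walkI3: "adj G a b \<Longrightarrow> adj G b d \<Longrightarrow> walk G [a,b,d]"
  using adj_verts[OF simple] by auto
lemma walkI4: "adj G a b \<Longrightarrow> adj G b d \<Longrightarrow> adj G d e \<Longrightarrow> walk G [a,b,d,e]"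
  using adj_verts[OF simple] by auto
lemma walkI5: "adj G a b \<Longrightarrow> adj G b d \<Longrightarrow> adj G d e \<Longrightarrow> adj G e f \<Longrightarrow> walk G [a,b,d,e,f]"
  using adj_verts[OF simple] by auto

lemma adj_c: "x \<in> N1 \<Longrightarrow> adj G c x" using adj_iff by blast
lemma adj_c': "x \<in> N1 \<Longrightarrow> adj G x c" using adj_iff by blast
lemma adj_p: "v \<in> N2 \<Longrightarrow> adj G (p v) v" using adj_iff by blast
lemma adj_p': "v \<in> N2 \<Longrightarrow> adj G v (p v)" using adj_iff by blast

lemma dist_c_N1: "x \<in> N1 \<Longrightarrow> dist G c x \<le> 1"
  using dist_le[OF walkI2[OF adj_c]] by fastforce
lemma dist_c_N2: "v \<in> N2 \<Longrightarrow> dist G c v \<le> 2"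
  using dist_le[OF walkI3[OF adj_c[OF pN1] adj_p]] by fastforce
lemma dist_N1_c: "x \<in> N1 \<Longrightarrow> dist G x c \<le> 1"
  using dist_le[OF walkI2[OF adj_c']] by fastforce
lemma dist_N1_N1: "x \<in> N1 \<Longrightarrow> y \<in> N1 \<Longrightarrow> dist G x y \<le> 2"
  using dist_le[OF walkI3[OF adj_c' adj_c]] by fastforce
lemma dist_N1_child: "v \<in> N2 \<Longrightarrow> dist G (p v) v \<le> 1"
  using dist_le[OF walkI2[OF adj_p]] by fastforce
lemma dist_N1_N2: "x \<in> N1 \<Longrightarrow> v \<in> N2 \<Longrightarrow> dist G x v \<le> 3"
  using dist_le[OF walkI4[OF adj_c' adj_c[OF pN1] adj_p]] by fastforce
lemma dist_N2_c: "v \<in> N2 \<Longrightarrow> dist G v c \<le> 2"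
  using dist_le[OF walkI3[OF adj_p' adj_c'[OF pN1]]] by fastforce
lemma dist_N2_par: "v \<in> N2 \<Longrightarrow> dist G v (p v) \<le> 1"
  using dist_le[OF walkI2[OF adj_p']] by fastforce
lemma dist_N2_N1: "v \<in> N2 \<Longrightarrow> y \<in> N1 \<Longrightarrow> dist G v y \<le> 3"
  using dist_le[OF walkI4[OF adj_p' adj_c'[OF pN1] adj_c]] by fastforce
lemma dist_N2_sib: "v \<in> N2 \<Longrightarrow> w \<in> N2 \<Longrightarrow> p w = p v \<Longrightarrow> dist G v w \<le> 2"
proof -
  assume a: "v \<in> N2" "w \<in> N2" "p w = p v"
  have "adj G (p v) w" using adj_p[OF a(2)] a(3) by simp
  then show ?thesis using dist_le[OF walkI3[OF adj_p'[OF a(1)]]] by fastforce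
qed
lemma dist_N2_N2: "v \<in> N2 \<Longrightarrow> w \<in> N2 \<Longrightarrow> dist G v w \<le> 4"
  using dist_le[OF walkI5[OF adj_p'[of v] adj_c'[OF pN1] adj_c[OF pN1] adj_p[of w]]] by fastforce

lemma conn: "u \<in> verts G \<Longrightarrow> v \<in> verts G \<Longrightarrow> \<exists>xs. walk G xs \<and> hd xs = u \<and> last xs = v"
proof -
  assume u: "u \<in> verts G" and v: "v \<in> verts G"
  have A: "\<exists>xs. walk G xs \<and> hd xs = u \<and> last xs = c"
  proof -
    consider "u = c" | "u \<in> N1" | "u \<in> N2" using u V by blast
    then show ?thesis
    proof cases
      case 1 then show ?thesis using cV by (intro exI[of _ "[c]"]) simp
    next
      case 2 then show ?thesis using walkI2[OF adj_c'[OF 2]] by (intro exI[of _ "[u,c]"]) simp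
    next
      case 3 then show ?thesis using walkI3[OF adj_p'[OF 3] adj_c'[OF pN1[OF 3]]] by (intro exI[of _ "[u,p u,c]"]) simp
    qed
  qed
  have B: "\<exists>xs. walk G xs \<and> hd xs = c \<and> last xs = v"
  proof -
    consider "v = c" | "v \<in> N1" | "v \<in> N2" using v V by blast
    then show ?thesis
    proof cases
      case 1 then show ?thesis using cV by (intro exI[of _ "[c]"]) simp
    next
      case 2 then show ?thesis using walkI2[OF adj_c[OF 2]] by (intro exI[of _ "[c,v]"]) simp
    next
      case 3 then show ?thesis using walkI3[OF adj_c[OF pN1[OF 3]] adj_p[OF 3]] by (intro exI[of _ "[c,p v,v]"]) simp
    qed
  qed
  obtain xs where xs: "walk G xs" "hd xs = u" "last xs = c" using A by blast
  obtain ys where ys: "walk G ys" "hd ys = c" "last ys = v" using B by blast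
  have ne: "xs \<noteq> []" "ys \<noteq> []" using xs ys unfolding walk_def by auto
  have "walk G (xs @ tl ys)"
  proof (cases "tl ys = []")
    case True then show ?thesis using xs by simp
  next
    case False
    have ys': "ys = c # tl ys" using ne ys by (cases ys) auto
    have "walk G (c # tl ys)" using ys ys' by simp
    then have "adj G c (hd (tl ys))" "walk G (tl ys)" using walk_Cons_hd[OF _ False] by auto
    then show ?thesis using walk_append[OF ne(1) False] xs by simp
  qed
  moreover have "hd (xs @ tl ys) = u" using xs ne by simp
  moreover have "last (xs @ tl ys) = v"
  proof (cases "tl ys = []")
    case True then have "ys = [c]" using ne ys by (cases ys) auto
    then show ?thesis using xs ys by simp
  next
    case False then show ?thesis using ys ne by (cases ys) auto
  qed
  ultimately show ?thesis by blast
qed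

end


context dstar begin

definition hc :: "'a \<Rightarrow> nat" where "hc u = (if u = c then 0 else if u \<in> N1 then 1 else 2)"
definition hx :: "'a \<Rightarrow> 'a \<Rightarrow> nat" where
  "hx x u = (if u = x then 0 else if u = c \<or> (u \<in> N2 \<and> p u = x) then 1 else if u \<in> N1 then 2 else 3)"
definition hv :: "'a \<Rightarrow> 'a \<Rightarrow> nat" where
  "hv v u = (if u = v then 0 else if u = p v then 1 else if u = c \<or> (u \<in> N2 \<and> p u = p v) then 2
             else if u \<in> N1 then 3 else 4)"

lemma pot_c: "adj G a b \<Longrightarrow> hc b \<le> hc a + 1"
  unfolding hc_def adj_iff using cN1 cN2 pN1 by auto

lemma pot_x: "x \<in> N1 \<Longrightarrow> adj G a b \<Longrightarrow> hx x b \<le> hx x a + 1"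
  unfolding hx_def adj_iff using cN1 cN2 disj pN1 by auto

lemma pot_v: "v \<in> N2 \<Longrightarrow> adj G a b \<Longrightarrow> hv v b \<le> hv v a + 1"
  unfolding hv_def adj_iff using cN1 cN2 disj pN1 by auto


lemma lb_c: "u \<in> verts G \<Longrightarrow> hc u \<le> dist G c u"
  using dist_potential[OF conn[OF cV], of u hc] pot_c by (simp add: hc_def)
lemma lb_x: "x \<in> N1 \<Longrightarrow> u \<in> verts G \<Longrightarrow> hx x u \<le> dist G x u"
  using dist_potential[OF conn[OF N1V], of x u "hx x"] pot_x by (simp add: hx_def)
lemma lb_v: "v \<in> N2 \<Longrightarrow> u \<in> verts G \<Longrightarrow> hv v u \<le> dist G v u"
  using dist_potential[OF conn[OF N2V], of v u "hv v"] pot_v by (simp add: hv_def)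

lemma ub_c: "u \<in> verts G \<Longrightarrow> dist G c u \<le> 2"
  using V dist_self[OF cV] dist_c_N1 dist_c_N2 by fastforce
lemma ub_x: "x \<in> N1 \<Longrightarrow> u \<in> verts G \<Longrightarrow> dist G x u \<le> 3"
  using V dist_N1_c[of x] dist_N1_N1[of x] dist_N1_N2[of x] by fastforce
lemma ub_v: "v \<in> N2 \<Longrightarrow> u \<in> verts G \<Longrightarrow> dist G v u \<le> 4"
  using V dist_N2_c[of v] dist_N2_N1[of v] dist_N2_N2[of v] by fastforce

lemma Vne: "verts G \<noteq> {}" using cV by auto

lemma ecc_c_N2: "N2 \<noteq> {} \<Longrightarrow> ecc G c = 2"
proof -
  assume "N2 \<noteq> {}" then obtain v where v: "v \<in> N2" by auto
  have "hc v = 2" using v cN2 disj unfolding hc_def by auto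
  then show ?thesis using ecc_eqI[OF finV ub_c N2V[OF v]] lb_c[OF N2V[OF v]] by simp
qed

lemma ecc_c_A: "N2 = {} \<Longrightarrow> N1 \<noteq> {} \<Longrightarrow> ecc G c = 1"
proof -
  assume N2: "N2 = {}" and "N1 \<noteq> {}" then obtain x where x: "x \<in> N1" by auto
  have "dist G c u \<le> 1" if "u \<in> verts G" for u using that V N2 dist_self[OF cV] dist_c_N1 by fastforce
  moreover have "hc x = 1" using x cN1 unfolding hc_def by auto
  ultimately show ?thesis using ecc_eqI[OF finV _ N1V[OF x], of c 1] lb_c[OF N1V[OF x]] by simp
qed

lemma ecc_x_C: "x \<in> N1 \<Longrightarrow> v \<in> N2 \<Longrightarrow> p v \<noteq> x \<Longrightarrow> ecc G x = 3"
proof -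
  assume x: "x \<in> N1" and v: "v \<in> N2" and pv: "p v \<noteq> x"
  have "hx x v = 3" using x v pv cN2 disj unfolding hx_def by auto
  then show ?thesis using ecc_eqI[OF finV ub_x[OF x] N2V[OF v]] lb_x[OF x N2V[OF v]] by simp
qed

lemma ecc_v_C: "v \<in> N2 \<Longrightarrow> w \<in> N2 \<Longrightarrow> p w \<noteq> p v \<Longrightarrow> ecc G v = 4"
proof -
  assume v: "v \<in> N2" and w: "w \<in> N2" and pw: "p w \<noteq> p v"
  have "w \<noteq> v" using pw by auto
  moreover have "w \<noteq> p v" using pN1[OF v] w disj by auto
  ultimately have "hv v w = 4" using w pw cN2 disj unfolding hv_def by auto
  then show ?thesis using ecc_eqI[OF finV ub_v[OF v] N2V[OF w]] lb_v[OF v N2V[OF w]] by simp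
qed

lemma ecc_x0_B: "x0 \<in> N1 \<Longrightarrow> \<forall>v\<in>N2. p v = x0 \<Longrightarrow> y \<in> N1 \<Longrightarrow> y \<noteq> x0 \<Longrightarrow> ecc G x0 = 2"
proof -
  assume x0: "x0 \<in> N1" and B: "\<forall>v\<in>N2. p v = x0" and y: "y \<in> N1" "y \<noteq> x0"
  have ub: "dist G x0 u \<le> 2" if u: "u \<in> verts G" for u
  proof -
    consider "u = c" | "u \<in> N1" | "u \<in> N2" using u V by auto
    then show ?thesis
    proof cases
      case 1 then show ?thesis using dist_N1_c[OF x0] by simp
    next
      case 2 then show ?thesis using dist_N1_N1[OF x0] by simp
    next
      case 3 then show ?thesis using dist_N1_child[OF 3] B by simp
    qed
  qed
  have "hx x0 y = 2" using y cN1 disj unfolding hx_def by auto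
  then show ?thesis using ecc_eqI[OF finV ub N1V[OF y(1)]] lb_x[OF x0 N1V[OF y(1)]] by simp
qed

lemma ecc_v_B: "x0 \<in> N1 \<Longrightarrow> \<forall>v\<in>N2. p v = x0 \<Longrightarrow> y \<in> N1 \<Longrightarrow> y \<noteq> x0 \<Longrightarrow> v \<in> N2 \<Longrightarrow> ecc G v = 3"
proof -
  assume x0: "x0 \<in> N1" and B: "\<forall>v\<in>N2. p v = x0" and y: "y \<in> N1" "y \<noteq> x0" and v: "v \<in> N2"
  have ub: "dist G v u \<le> 3" if u: "u \<in> verts G" for u
  proof -
    consider "u = c" | "u \<in> N1" | "u \<in> N2" using u V by auto
    then show ?thesis
    proof cases
      case 1 then show ?thesis using dist_N2_c[OF v] by simp
    next
      case 2 then show ?thesis using dist_N2_N1[OF v] by simp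
    next
      case 3 then show ?thesis using dist_N2_sib[OF v 3] B v by simp
    qed
  qed
  have "y \<noteq> v" using y v disj by auto
  then have "hv v y = 3" using y B v cN1 disj unfolding hv_def by auto
  then show ?thesis using ecc_eqI[OF finV ub N1V[OF y(1)]] lb_v[OF v N1V[OF y(1)]] by simp
qed

lemma ecc_x0_B': "x0 \<in> N1 \<Longrightarrow> \<forall>v\<in>N2. p v = x0 \<Longrightarrow> N1 = {x0} \<Longrightarrow> ecc G x0 \<le> 1"
proof -
  assume x0: "x0 \<in> N1" and B: "\<forall>v\<in>N2. p v = x0" and N1: "N1 = {x0}"
  have ub: "dist G x0 u \<le> 1" if u: "u \<in> verts G" for u
  proof -
    consider "u = c" | "u = x0" | "u \<in> N2" using u V N1 by auto
    then show ?thesis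
    proof cases
      case 1 then show ?thesis using dist_N1_c[OF x0] by simp
    next
      case 2 then show ?thesis using dist_self[OF N1V[OF x0]] by simp
    next
      case 3 then show ?thesis using dist_N1_child[OF 3] B by simp
    qed
  qed
  then show ?thesis using ecc_le[OF finV Vne] by blast
qed

lemma ecc_A: "N2 = {} \<Longrightarrow> x \<in> N1 \<Longrightarrow> ecc G x = (if card N1 \<ge> 2 then 2 else 1)"
proof -
  assume N2: "N2 = {}" and x: "x \<in> N1"
  show ?thesis
  proof (cases "card N1 \<ge> 2")
    case True
    have "\<exists>y\<in>N1. y \<noteq> x"
    proof (rule ccontr)
      assume H: "\<not> (\<exists>y\<in>N1. y \<noteq> x)"
      have "N1 \<subseteq> {x}" using H by auto
      then have "card N1 \<le> 1" using card_mono[of "{x}" N1] by simp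
      then show False using True by simp
    qed
    then obtain y where y: "y \<in> N1" "y \<noteq> x" by blast
    have ub: "dist G x u \<le> 2" if u: "u \<in> verts G" for u
    proof -
      consider "u = c" | "u \<in> N1" using u V N2 by auto
      then show ?thesis
      proof cases
        case 1 then show ?thesis using dist_N1_c[OF x] by simp
      next
        case 2 then show ?thesis using dist_N1_N1[OF x] by simp
      qed
    qed
    have "hx x y = 2" using y cN1 disj unfolding hx_def by auto
    then show ?thesis using True ecc_eqI[OF finV ub N1V[OF y(1)]] lb_x[OF x N1V[OF y(1)]] by simp
  next
    case False
    have "card N1 > 0" using x fin1 card_gt_0_iff by blast
    then have "card N1 = 1" using False by linarith
    then obtain z where "N1 = {z}" by (rule card_1_singletonE)
    then have N1: "N1 = {x}" using x by simp
    have ub: "dist G x u \<le> 1" if u: "u \<in> verts G" for u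
    proof -
      consider "u = c" | "u = x" using u V N2 N1 by auto
      then show ?thesis
      proof cases
        case 1 then show ?thesis using dist_N1_c[OF x] by simp
      next
        case 2 then show ?thesis using dist_self[OF N1V[OF x]] by simp
      qed
    qed
    have "hx x c = 1" unfolding hx_def using x cN1 by auto
    then show ?thesis using False ecc_eqI[OF finV ub cV] lb_x[OF x cV] by simp
  qed
qed

end


context dstar begin

lemma cardV: "card (verts G) = 1 + card N1 + card N2"
proof -
  have "card (N1 \<union> N2) = card N1 + card N2" using fin1 fin2 disj by (rule card_Un_disjoint)
  moreover have "c \<notin> N1 \<union> N2" using cN1 cN2 by simp
  ultimately show ?thesis using V fin1 fin2 by simp
qed

lemma xi_D: "xi_ee G = (\<Sum>x\<in>N1. 1 / real (ecc G c) + 1 / real (ecc G x)) + (\<Sum>v\<in>N2. 1 / real (ecc G (p v)) + 1 / real (ecc G v))"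
proof -
  let ?f = "\<lambda>e. \<Sum>x\<in>e. 1 / real (ecc G x)"
  have d: "(\<lambda>x. {c,x}) ` N1 \<inter> (\<lambda>v. {p v, v}) ` N2 = {}"
  proof (rule ccontr)
    assume "(\<lambda>x. {c,x}) ` N1 \<inter> (\<lambda>v. {p v, v}) ` N2 \<noteq> {}"
    then obtain x v where xv: "x \<in> N1" "v \<in> N2" "{c,x} = {p v, v}" by auto
    then have "v \<in> {c,x}" by simp
    then show False using xv cN2 disj by auto
  qed
  have i1: "inj_on (\<lambda>x. {c,x}) N1"
  proof (rule inj_onI)
    fix x y assume "x \<in> N1" "y \<in> N1" "{c,x} = {c,y}"
    then show "x = y" using cN1 by (auto simp: doubleton_eq_iff)
  qed
  have i2: "inj_on (\<lambda>v. {p v, v}) N2"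
  proof (rule inj_onI)
    fix v w assume vw: "v \<in> N2" "w \<in> N2" "{p v, v} = {p w, w}"
    have "v \<in> {p v, v}" by simp
    then have "v \<in> {p w, w}" by (simp only: vw(3))
    moreover have "v \<noteq> p w" using vw pN1 disj by auto
    ultimately show "v = w" by simp
  qed
  have "xi_ee G = (\<Sum>e\<in>(\<lambda>x. {c,x}) ` N1. ?f e) + (\<Sum>e\<in>(\<lambda>v. {p v, v}) ` N2. ?f e)"
    unfolding xi_ee_def E using fin1 fin2 d by (intro sum.union_disjoint) auto
  also have "(\<Sum>e\<in>(\<lambda>x. {c,x}) ` N1. ?f e) = (\<Sum>x\<in>N1. ?f {c,x})"
    using sum.reindex[OF i1] by simp
  also have "\<dots> = (\<Sum>x\<in>N1. 1 / real (ecc G c) + 1 / real (ecc G x))"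
  proof (rule sum.cong[OF refl])
    fix x assume "x \<in> N1" then have "c \<noteq> x" using cN1 by auto
    then show "?f {c,x} = 1 / real (ecc G c) + 1 / real (ecc G x)" by simp
  qed
  also have "(\<Sum>e\<in>(\<lambda>v. {p v, v}) ` N2. ?f e) = (\<Sum>v\<in>N2. ?f {p v, v})"
    using sum.reindex[OF i2] by simp
  also have "\<dots> = (\<Sum>v\<in>N2. 1 / real (ecc G (p v)) + 1 / real (ecc G v))"
  proof (rule sum.cong[OF refl])
    fix v assume "v \<in> N2" then have "p v \<noteq> v" by (rule p_neq)
    then show "?f {p v, v} = 1 / real (ecc G (p v)) + 1 / real (ecc G v)" by simp
  qed
  finally show ?thesis .
qed

lemma beta_K: "matching_number G \<le> card (p ` N2) + 1"
proof -
  let ?S = "insert c (p ` N2)"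
  have "matching_number G \<le> card ?S"
  proof (rule matching_cover[OF simple])
    show "finite ?S" using fin2 by simp
  next
    fix e assume "e \<in> edges G"
    then consider x where "x \<in> N1" "e = {c,x}" | v where "v \<in> N2" "e = {p v, v}" unfolding E by auto
    then show "e \<inter> ?S \<noteq> {}"
    proof cases
      case 1 then show ?thesis by auto
    next
      case 2 then have "p v \<in> e \<inter> ?S" by auto
      then show ?thesis by auto
    qed
  qed
  moreover have "card ?S \<le> card (p ` N2) + 1" by (simp add: card_insert_le_m1 card_insert_if)
  ultimately show ?thesis by linarith
qed

lemma beta_A: "N2 = {} \<Longrightarrow> matching_number G \<le> 1"
  using beta_K by simp

lemma beta_B: "\<forall>v\<in>N2. p v = x0 \<Longrightarrow> matching_number G \<le> 2"
proof -
  assume B: "\<forall>v\<in>N2. p v = x0"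
  have "p ` N2 \<subseteq> {x0}" using B by auto
  then have "card (p ` N2) \<le> 1" using card_mono[of "{x0}" "p ` N2"] by simp
  then show ?thesis using beta_K by linarith
qed

lemma beta_0: "N1 = {} \<Longrightarrow> matching_number G = 0"
proof -
  assume N1: "N1 = {}"
  then have N2: "N2 = {}" using pN1 by auto
  have "matching_number G \<le> card ({} :: 'a set)"
    by (rule matching_cover[OF simple]) (use N1 N2 E in auto)
  then show ?thesis by simp
qed

lemma beta2_B: "y \<in> N1 \<Longrightarrow> x0 \<in> N1 \<Longrightarrow> y \<noteq> x0 \<Longrightarrow> v \<in> N2 \<Longrightarrow> p v = x0 \<Longrightarrow> 2 \<le> matching_number G"
proof -
  assume a: "y \<in> N1" "x0 \<in> N1" "y \<noteq> x0" "v \<in> N2" "p v = x0"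
  have e1: "{c,y} \<in> edges G" using a edge_iff by simp
  have e2: "{x0,v} \<in> edges G" using a edge_iff by auto
  have "{c,y} \<inter> {x0,v} = {}" using a cN1 cN2 disj by auto
  then show ?thesis using matching_two[OF simple e1 e2] by simp
qed

lemma beta2_C: "v1 \<in> N2 \<Longrightarrow> v2 \<in> N2 \<Longrightarrow> p v1 \<noteq> p v2 \<Longrightarrow> 2 \<le> matching_number G"
proof -
  assume a: "v1 \<in> N2" "v2 \<in> N2" "p v1 \<noteq> p v2"
  have e1: "{p v1,v1} \<in> edges G" using a edge_iff by auto
  have e2: "{p v2,v2} \<in> edges G" using a edge_iff by auto
  have "p v1 \<in> N1" "p v2 \<in> N1" using a pN1 by auto
  then have "{p v1,v1} \<inter> {p v2,v2} = {}" using a disj by auto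
  then show ?thesis using matching_two[OF simple e1 e2] by simp
qed

lemma xi_A: "N2 = {} \<Longrightarrow> N1 \<noteq> {} \<Longrightarrow> xi_ee G = real (card N1) * (1 + 1 / (if card N1 \<ge> 2 then 2 else 1))"
proof -
  assume N2: "N2 = {}" and N1: "N1 \<noteq> {}"
  have "xi_ee G = (\<Sum>x\<in>N1. 1 + 1 / real (if card N1 \<ge> 2 then 2 else 1::nat))"
    unfolding xi_D using N2 ecc_c_A[OF N2 N1] ecc_A[OF N2] by simp
  then show ?thesis by simp
qed

lemma xi_B: "x0 \<in> N1 \<Longrightarrow> \<forall>v\<in>N2. p v = x0 \<Longrightarrow> y \<in> N1 \<Longrightarrow> y \<noteq> x0 \<Longrightarrow> N2 \<noteq> {} \<Longrightarrow>
   xi_ee G = 1 + 5/6 * (real (card N1) - 1) + 5/6 * real (card N2)"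
proof -
  assume x0: "x0 \<in> N1" and B: "\<forall>v\<in>N2. p v = x0" and y: "y \<in> N1" "y \<noteq> x0" and N2: "N2 \<noteq> {}"
  obtain v0 where v0: "v0 \<in> N2" using N2 by auto
  have ec: "ecc G c = 2" using ecc_c_N2[OF N2] .
  have e0: "ecc G x0 = 2" using ecc_x0_B[OF x0 B y] .
  have ey: "ecc G z = 3" if "z \<in> N1" "z \<noteq> x0" for z using ecc_x_C[OF that(1) v0] B v0 that by simp
  have ev: "ecc G v = 3" if "v \<in> N2" for v using ecc_v_B[OF x0 B y that] .
  have s1: "(\<Sum>x\<in>N1. 1 / real (ecc G c) + 1 / real (ecc G x)) = 1 + 5/6 * (real (card N1) - 1)"
  proof -
    have "(\<Sum>x\<in>N1. 1 / real (ecc G c) + 1 / real (ecc G x)) =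
          (1 / real (ecc G c) + 1 / real (ecc G x0)) + (\<Sum>x\<in>N1 - {x0}. 1 / real (ecc G c) + 1 / real (ecc G x))"
      using sum.remove[OF fin1 x0] by simp
    also have "(\<Sum>x\<in>N1 - {x0}. 1 / real (ecc G c) + 1 / real (ecc G x)) = (\<Sum>x\<in>N1 - {x0}. 5/6)"
      using ey ec by (intro sum.cong) auto
    also have "\<dots> = 5/6 * (real (card N1) - 1)"
    proof -
      have "card N1 > 0" using x0 fin1 card_gt_0_iff by blast
      then have "real (card N1 - 1) = real (card N1) - 1" by (simp add: of_nat_diff)
      then show ?thesis using x0 fin1 by simp
    qed
    finally show ?thesis using ec e0 by simp
  qed
  have s2: "(\<Sum>v\<in>N2. 1 / real (ecc G (p v)) + 1 / real (ecc G v)) = 5/6 * real (card N2)"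
  proof -
    have "(\<Sum>v\<in>N2. 1 / real (ecc G (p v)) + 1 / real (ecc G v)) = (\<Sum>v\<in>N2. 5/6)"
      using ev B e0 by (intro sum.cong) auto
    then show ?thesis by simp
  qed
  show ?thesis unfolding xi_D s1 s2 ..
qed

lemma xi_C: "v1 \<in> N2 \<Longrightarrow> v2 \<in> N2 \<Longrightarrow> p v1 \<noteq> p v2 \<Longrightarrow>
   xi_ee G = 5/6 * real (card N1) + 7/12 * real (card N2)"
proof -
  assume a: "v1 \<in> N2" "v2 \<in> N2" "p v1 \<noteq> p v2"
  have ec: "ecc G c = 2" using ecc_c_N2 a by auto
  have ex: "ecc G x = 3" if x: "x \<in> N1" for x
  proof (cases "p v1 = x")
    case True then show ?thesis using ecc_x_C[OF x a(2)] a by simp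
  next
    case False then show ?thesis using ecc_x_C[OF x a(1)] by simp
  qed
  have ev: "ecc G v = 4" if v: "v \<in> N2" for v
  proof (cases "p v1 = p v")
    case True then show ?thesis using ecc_v_C[OF v a(2)] a by simp
  next
    case False then show ?thesis using ecc_v_C[OF v a(1)] by simp
  qed
  have s1: "(\<Sum>x\<in>N1. 1 / real (ecc G c) + 1 / real (ecc G x)) = (\<Sum>x\<in>N1. 5/6)"
    using ex ec by (intro sum.cong) auto
  have s2: "(\<Sum>v\<in>N2. 1 / real (ecc G (p v)) + 1 / real (ecc G v)) = (\<Sum>v\<in>N2. 7/12)"
    using ev ex pN1 by (intro sum.cong) auto
  show ?thesis unfolding xi_D s1 s2 by simp
qed

end

lemma dstar_iso:
  assumes dG: "dstar G c N1 N2 p" and dH: "dstar H c' N1' N2' p'"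
    and b1: "bij_betw f1 N1 N1'" and b2: "bij_betw f2 N2 N2'"
    and par: "\<And>v. v \<in> N2 \<Longrightarrow> p' (f2 v) = f1 (p v)"
  shows "graph_iso G H"
proof -
  interpret G: dstar G c N1 N2 p by (rule dG)
  interpret H: dstar H c' N1' N2' p' by (rule dH)
  define f where "f x = (if x = c then c' else if x \<in> N1 then f1 x else f2 x)" for x
  have f1i: "f1 x \<in> N1'" if "x \<in> N1" for x using b1 that bij_betwE by blast
  have f2i: "f2 x \<in> N2'" if "x \<in> N2" for x using b2 that bij_betwE by blast
  have fc: "f c = c'" unfolding f_def by simp
  have fN1: "f x = f1 x" if "x \<in> N1" for x using that G.cN1 unfolding f_def by auto
  have fN2: "f x = f2 x" if "x \<in> N2" for x using that G.cN2 G.disj unfolding f_def by auto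
  have inj1: "inj_on f1 N1" and inj2: "inj_on f2 N2" using b1 b2 bij_betw_def by auto
  have cls: "(f u = c' \<longleftrightarrow> u = c) \<and> (f u \<in> N1' \<longleftrightarrow> u \<in> N1) \<and> (f u \<in> N2' \<longleftrightarrow> u \<in> N2)"
    if u: "u \<in> verts G" for u
  proof -
    consider "u = c" | "u \<in> N1" | "u \<in> N2" using u G.V by auto
    then show ?thesis
    proof cases
      case 1 then show ?thesis using fc H.cN1 H.cN2 G.cN1 G.cN2 by simp
    next
      case 2 then have "f u \<in> N1'" using fN1 f1i by simp
      then show ?thesis using 2 H.cN1 H.disj G.cN1 G.disj by auto
    next
      case 3 then have "f u \<in> N2'" using fN2 f2i by simp
      then show ?thesis using 3 H.cN2 H.disj G.cN2 G.disj by auto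
    qed
  qed
  have cls_c: "f u = c' \<longleftrightarrow> u = c" and cls_1: "f u \<in> N1' \<longleftrightarrow> u \<in> N1" and cls_2: "f u \<in> N2' \<longleftrightarrow> u \<in> N2"
    if "u \<in> verts G" for u using cls[OF that] by auto
  have clsp: "f u = p' (f v) \<longleftrightarrow> u = p v" if "u \<in> verts G" "v \<in> N2" for u v
  proof -
    have pv: "p v \<in> N1" using G.pN1 that(2) by simp
    have "p' (f v) = f1 (p v)" using par that(2) fN2 by simp
    moreover have "f u = f1 (p v) \<longleftrightarrow> u = p v"
    proof
      assume h: "f u = f1 (p v)"
      then have "f u \<in> N1'" using f1i pv by simp
      then have u1: "u \<in> N1" using cls_1 that(1) by simp
      then have "f1 u = f1 (p v)" using h fN1 by simp
      then show "u = p v" using inj1 u1 pv inj_on_eq_iff by metis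
    next
      assume "u = p v" then show "f u = f1 (p v)" using fN1 pv by simp
    qed
    ultimately show ?thesis by simp
  qed
  have adjf: "adj H (f u) (f v) \<longleftrightarrow> adj G u v" if u: "u \<in> verts G" and v: "v \<in> verts G" for u v
  proof -
    have d1: "(f u = c' \<and> f v \<in> N1') \<longleftrightarrow> (u = c \<and> v \<in> N1)" using cls_c[OF u] cls_1[OF v] by simp
    have d2: "(f v = c' \<and> f u \<in> N1') \<longleftrightarrow> (v = c \<and> u \<in> N1)" using cls_c[OF v] cls_1[OF u] by simp
    have d3: "(f v \<in> N2' \<and> f u = p' (f v)) \<longleftrightarrow> (v \<in> N2 \<and> u = p v)"
    proof (cases "v \<in> N2")
      case True then show ?thesis using cls_2[OF v] clsp[OF u True] by simp
    next
      case False then show ?thesis using cls_2[OF v] by simp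
    qed
    have d4: "(f u \<in> N2' \<and> f v = p' (f u)) \<longleftrightarrow> (u \<in> N2 \<and> v = p u)"
    proof (cases "u \<in> N2")
      case True then show ?thesis using cls_2[OF u] clsp[OF v True] by simp
    next
      case False then show ?thesis using cls_2[OF u] by simp
    qed
    show ?thesis by (simp only: H.adj_iff G.adj_iff d1 d2 d3 d4)
  qed
  have bij: "bij_betw f (verts G) (verts H)"
  proof -
    have b0: "bij_betw (\<lambda>x. if x \<in> N1 then f1 x else f2 x) (N1 \<union> N2) (N1' \<union> N2')"
      by (rule bij_betw_disjoint_Un[OF b1 b2 G.disj H.disj])
    have "bij_betw f (N1 \<union> N2) (N1' \<union> N2') = bij_betw (\<lambda>x. if x \<in> N1 then f1 x else f2 x) (N1 \<union> N2) (N1' \<union> N2')"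
      by (rule bij_betw_cong) (use fN1 fN2 in auto)
    then have b3: "bij_betw f (N1 \<union> N2) (N1' \<union> N2')" using b0 by simp
    have b4: "bij_betw f {c} {c'}" by (simp add: bij_betw_def fc)
    have "bij_betw f ({c} \<union> (N1 \<union> N2)) ({c'} \<union> (N1' \<union> N2'))"
      by (rule bij_betw_combine[OF b4 b3]) (use H.cN1 H.cN2 in auto)
    then show ?thesis using G.V H.V by simp
  qed
  show ?thesis unfolding graph_iso_def
  proof (intro exI[of _ f] conjI ballI)
    show "bij_betw f (verts G) (verts H)" by (rule bij)
  next
    fix u v assume u: "u \<in> verts G" and v: "v \<in> verts G"
    show "({u, v} \<in> edges G) = ({f u, f v} \<in> edges H)"
      using G.edge_adj H.edge_adj adjf[OF u v] by simp
  qed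
qed



lemma star_dstar: "n \<ge> 1 \<Longrightarrow> dstar (star_graph n) 0 {1..<n} {} id"
proof (unfold_locales)
  assume n: "n \<ge> 1"
  show "finite (verts (star_graph n))" unfolding star_graph_def verts_def by simp
  show "verts (star_graph n) = insert 0 ({1..<n} \<union> {})" unfolding star_graph_def verts_def using n by auto
  show "edges (star_graph n) = (\<lambda>x. {0, x}) ` {1..<n} \<union> (\<lambda>v. {id v, v}) ` {}"
    unfolding star_graph_def edges_def by auto
qed auto

lemma P_dstar: "dstar (P_graph 2 a b) 0 {1..<a+2} {a+2..<a+b+2} (\<lambda>_. 1)"
proof (unfold_locales)
  show "finite (verts (P_graph 2 a b))" unfolding P_graph_def verts_def by simp
  show "verts (P_graph 2 a b) = insert 0 ({1..<a+2} \<union> {a+2..<a+b+2})" unfolding P_graph_def verts_def by auto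
  have e1: "{{i, i + 1} |i. i + 1 < (2::nat)} = {{0,1}}" by auto
  have e2: "{{0::nat, 2 + j} |j. j < a} = (\<lambda>x. {0, x}) ` {2..<a+2}"
  proof (intro set_eqI iffI)
    fix e assume "e \<in> {{0::nat, 2 + j} |j. j < a}"
    then obtain j where "j < a" "e = {0, 2+j}" by blast
    then show "e \<in> (\<lambda>x. {0, x}) ` {2..<a+2}" by (intro image_eqI[where x="2+j"]) auto
  next
    fix e assume "e \<in> (\<lambda>x. {0::nat, x}) ` {2..<a+2}"
    then obtain x where "x \<in> {2..<a+2}" "e = {0, x}" by blast
    then show "e \<in> {{0::nat, 2 + j} |j. j < a}" by (intro CollectI exI[where x="x-2"]) auto
  qed
  have e3: "{{2 - 1, 2 + a + j} |j. j < b} = (\<lambda>v. {1::nat, v}) ` {a+2..<a+b+2}"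
  proof (intro set_eqI iffI)
    fix e assume "e \<in> {{2 - 1, 2 + a + j} |j. j < b}"
    then obtain j where "j < b" "e = {1, 2+a+j}" by auto
    then show "e \<in> (\<lambda>v. {1, v}) ` {a+2..<a+b+2}" by (intro image_eqI[where x="2+a+j"]) auto
  next
    fix e assume "e \<in> (\<lambda>v. {1::nat, v}) ` {a+2..<a+b+2}"
    then obtain x where "x \<in> {a+2..<a+b+2}" "e = {1, x}" by blast
    then show "e \<in> {{2 - 1, 2 + a + j} |j. j < b}" by (intro CollectI exI[where x="x-(a+2)"]) auto
  qed
  have "{1..<a+2} = insert (1::nat) {2..<a+2}" by auto
  then have "(\<lambda>x. {0::nat, x}) ` {1..<a+2} = insert {0,1} ((\<lambda>x. {0, x}) ` {2..<a+2})" by simp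
  then show "edges (P_graph 2 a b) = (\<lambda>x. {0, x}) ` {1..<a+2} \<union> (\<lambda>v. {1, v}) ` {a+2..<a+b+2}"
    unfolding P_graph_def edges_def snd_conv e1 e2 e3 by auto
qed auto

lemma P0_dstar: "dstar (P_graph 2 0 b) 1 (insert 0 {2..<b+2}) {} id"
proof (unfold_locales)
  show "finite (verts (P_graph 2 0 b))" unfolding P_graph_def verts_def by simp
  show "verts (P_graph 2 0 b) = insert 1 (insert 0 {2..<b+2} \<union> {})" unfolding P_graph_def verts_def by auto
  have e1: "{{i, i + 1} |i. i + 1 < (2::nat)} = {{1,0}}" by auto
  have e3: "{{2 - 1, 2 + 0 + j} |j. j < b} = (\<lambda>v. {1::nat, v}) ` {2..<b+2}"
  proof (intro set_eqI iffI)
    fix e assume "e \<in> {{2 - 1, 2 + 0 + j} |j. j < b}"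
    then obtain j where "j < b" "e = {1, 2+j}" by auto
    then show "e \<in> (\<lambda>v. {1, v}) ` {2..<b+2}" by (intro image_eqI[where x="2+j"]) auto
  next
    fix e assume "e \<in> (\<lambda>v. {1::nat, v}) ` {2..<b+2}"
    then obtain x where "x \<in> {2..<b+2}" "e = {1, x}" by blast
    then show "e \<in> {{2 - 1, 2 + 0 + j} |j. j < b}" by (intro CollectI exI[where x="x-2"]) auto
  qed
  have e2: "{{0::nat, 2 + j} |j. j < 0} = {}" by auto
  show "edges (P_graph 2 0 b) = (\<lambda>x. {1, x}) ` insert 0 {2..<b+2} \<union> (\<lambda>v. {id v, v}) ` {}"
    unfolding P_graph_def edges_def snd_conv e1 e2 e3 by auto
qed auto

lemma T_dstar: "\<beta> \<ge> 1 \<Longrightarrow> n \<ge> 2 * \<beta> \<Longrightarrow> dstar (T_graph n \<beta>) 0 {1..n-\<beta>} {n-\<beta>+1..<n} (\<lambda>v. v - (n - \<beta>))"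
proof (unfold_locales)
  assume b: "\<beta> \<ge> 1" and n: "n \<ge> 2 * \<beta>"
  show "finite (verts (T_graph n \<beta>))" unfolding T_graph_def verts_def by simp
  show "verts (T_graph n \<beta>) = insert 0 ({1..n-\<beta>} \<union> {n-\<beta>+1..<n})" unfolding T_graph_def verts_def using b n by auto
  show "\<And>v. v \<in> {n - \<beta> + 1..<n} \<Longrightarrow> v - (n - \<beta>) \<in> {1..n - \<beta>}" using b n by auto
  have e2: "{{i, n - \<beta> + i} |i. 1 \<le> i \<and> i < \<beta>} = (\<lambda>v. {v - (n - \<beta>), v}) ` {n-\<beta>+1..<n}"
  proof (intro set_eqI iffI)
    fix e assume "e \<in> {{i, n - \<beta> + i} |i. 1 \<le> i \<and> i < \<beta>}"
    then obtain i where i: "1 \<le> i" "i < \<beta>" "e = {i, n - \<beta> + i}" by blast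
    then show "e \<in> (\<lambda>v. {v - (n - \<beta>), v}) ` {n-\<beta>+1..<n}" using n
      by (intro image_eqI[where x="n - \<beta> + i"]) auto
  next
    fix e assume "e \<in> (\<lambda>v. {v - (n - \<beta>), v}) ` {n-\<beta>+1..<n}"
    then obtain v where v: "v \<in> {n-\<beta>+1..<n}" "e = {v - (n - \<beta>), v}" by blast
    then show "e \<in> {{i, n - \<beta> + i} |i. 1 \<le> i \<and> i < \<beta>}" using n
      by (intro CollectI exI[where x="v - (n - \<beta>)"]) auto
  qed
  have e1: "{{0::nat, i} |i. 1 \<le> i \<and> i \<le> n - \<beta>} = (\<lambda>x. {0, x}) ` {1..n-\<beta>}" by auto
  show "edges (T_graph n \<beta>) = (\<lambda>x. {0, x}) ` {1..n-\<beta>} \<union> (\<lambda>v. {v - (n - \<beta>), v}) ` {n-\<beta>+1..<n}"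
    unfolding T_graph_def edges_def snd_conv e1 e2 ..
qed auto

lemma xi_star: "n \<ge> 2 \<Longrightarrow> xi_ee (star_graph n) = real (n - 1) * (1 + 1 / (if n - 1 \<ge> 2 then 2 else 1))"
proof -
  assume n: "n \<ge> 2"
  interpret dstar "star_graph n" 0 "{1..<n}" "{}" id using star_dstar n by simp
  have "{1..<n} \<noteq> {}" using n by auto
  then show ?thesis using xi_A by simp
qed

lemma xi_P: "a \<ge> 1 \<Longrightarrow> b \<ge> 1 \<Longrightarrow> xi_ee (P_graph 2 a b) = (5 * real (a + b + 2) - 4) / 6"
proof -
  assume a: "a \<ge> 1" and b: "b \<ge> 1"
  interpret dstar "P_graph 2 a b" 0 "{1..<a+2}" "{a+2..<a+b+2}" "\<lambda>_. 1" by (rule P_dstar)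
  have "xi_ee (P_graph 2 a b) = 1 + 5/6 * (real (card {1..<a+2}) - 1) + 5/6 * real (card {a+2..<a+b+2})"
    by (rule xi_B[of 1 2]) (use a b in auto)
  then show ?thesis by (simp add: field_simps)
qed

lemma xi_P_ge: "a = 0 \<or> b = 0 \<Longrightarrow> xi_ee (P_graph 2 a b) \<ge> 3/2 * (real (a + b + 2) - 1)"
proof -
  assume ab: "a = 0 \<or> b = 0"
  have key: "xi_ee G \<ge> 3/2 * real (card N1)" if d: "dstar G c N1 {} p" and ne: "N1 \<noteq> {}" for G :: "nat graph" and c N1 p
  proof -
    interpret dstar G c N1 "{}" p by (rule d)
    have x: "xi_ee G = real (card N1) * (1 + 1 / (if card N1 \<ge> 2 then 2 else 1))" using xi_A ne by simp
    have "(1::real) + 1 / (if card N1 \<ge> 2 then 2 else 1) \<ge> 3/2" by simp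
    then have "real (card N1) * (1 + 1 / (if card N1 \<ge> 2 then 2 else 1)) \<ge> real (card N1) * (3/2)"
      by (intro mult_left_mono) auto
    then show ?thesis using x by simp
  qed
  show ?thesis
  proof (cases "b = 0")
    case True
    have "dstar (P_graph 2 a b) 0 {1..<a+2} {} (\<lambda>_. 1)" using P_dstar[of a b] True by simp
    from key[OF this] True show ?thesis by simp
  next
    case False
    then have a0: "a = 0" using ab by simp
    have c: "card (insert 0 {2..<b+2}) = b + 1" by simp
    from key[OF P0_dstar[of b]] a0 c show ?thesis by simp
  qed
qed

lemma xi_T: "\<beta> \<ge> 3 \<Longrightarrow> n \<ge> 2 * \<beta> \<Longrightarrow> xi_ee (T_graph n \<beta>) = (10 * real n - 3 * real \<beta> - 7) / 12"
proof -
  assume b: "\<beta> \<ge> 3" and n: "n \<ge> 2 * \<beta>"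
  interpret dstar "T_graph n \<beta>" 0 "{1..n-\<beta>}" "{n-\<beta>+1..<n}" "\<lambda>v. v - (n - \<beta>)" using T_dstar b n by simp
  have "xi_ee (T_graph n \<beta>) = 5/6 * real (card {1..n-\<beta>}) + 7/12 * real (card {n-\<beta>+1..<n})"
    by (rule xi_C[of "n-\<beta>+1" "n-\<beta>+2"]) (use b n in auto)
  moreover have "card {1..n-\<beta>} = n - \<beta>" by simp
  moreover have "card {n-\<beta>+1..<n} = \<beta> - 1" using n b by simp
  ultimately show ?thesis using n b by (simp add: of_nat_diff field_simps)
qed



lemma tree_dstar:
  assumes t: "tree T" and cV: "c \<in> verts T" and e: "ecc T c \<le> 2"
  defines "N1 \<equiv> {x \<in> verts T. adj T c x}"
  defines "N2 \<equiv> verts T - insert c N1"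
  defines "p \<equiv> (\<lambda>v. SOME x. x \<in> N1 \<and> adj T x v)"
  shows "dstar T c N1 N2 p"
proof -
  have s: "simple_graph T" using t unfolding tree_def by simp
  have cn: "connected_graph T" using t unfolding tree_def by simp
  have finV: "finite (verts T)" using s unfolding simple_graph_def by simp
  have pv: "p v \<in> N1 \<and> adj T (p v) v" if v: "v \<in> N2" for v
  proof -
    have vV: "v \<in> verts T" using v N2_def by simp
    have w: "\<exists>xs. walk T xs \<and> hd xs = c \<and> last xs = v" using conn_walk[OF cn cV vV] .
    have d2: "dist T c v \<le> 2" using ecc_ge[OF finV vV, of c] e by simp
    have "dist T c v \<noteq> 0" using dist_0[OF w] v N2_def by auto
    moreover have "dist T c v \<noteq> 1" using dist_1[OF w] v vV N1_def N2_def by auto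
    ultimately have "dist T c v = 2" using d2 by linarith
    then obtain x where "adj T c x" "adj T x v" using dist_2[OF w] by blast
    then have "\<exists>x. x \<in> N1 \<and> adj T x v" using adj_verts[OF s] N1_def by blast
    then show ?thesis unfolding p_def by (rule someI_ex)
  qed
  have cN1: "c \<notin> N1" unfolding N1_def adj_def by simp
  have V: "verts T = insert c (N1 \<union> N2)" unfolding N2_def using cV N1_def by auto
  have adjc: "adj T c x \<longleftrightarrow> x \<in> N1" if "x \<in> verts T" for x using that N1_def by simp
  have inN: "x = c \<or> x \<in> N1 \<or> x \<in> N2" if "x \<in> verts T" for x using that V by auto
  have EE: "edges T = (\<lambda>x. {c,x}) ` N1 \<union> (\<lambda>v. {p v, v}) ` N2"
  proof
    show "(\<lambda>x. {c,x}) ` N1 \<union> (\<lambda>v. {p v, v}) ` N2 \<subseteq> edges T"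
    proof
      fix e assume "e \<in> (\<lambda>x. {c,x}) ` N1 \<union> (\<lambda>v. {p v, v}) ` N2"
      then consider x where "x \<in> N1" "e = {c,x}" | v where "v \<in> N2" "e = {p v, v}" by blast
      then show "e \<in> edges T"
      proof cases
        case 1 then show ?thesis using N1_def unfolding adj_def by simp
      next
        case 2 then show ?thesis using pv[OF 2(1)] unfolding adj_def by simp
      qed
    qed
  next
    show "edges T \<subseteq> (\<lambda>x. {c,x}) ` N1 \<union> (\<lambda>v. {p v, v}) ` N2"
    proof
      fix e assume eE: "e \<in> edges T"
      then obtain a b where ab: "e = {a,b}" "a \<noteq> b" "a \<in> verts T" "b \<in> verts T" using simple_edge[OF s] by blast
      have abj: "adj T a b" using ab eE unfolding adj_def by simp
      have bja: "adj T b a" using abj adj_sym by metis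
      have N1c: "adj T c x" if "x \<in> N1" for x using that N1_def by simp
      have N1c': "adj T x c" if "x \<in> N1" for x using N1c[OF that] adj_sym by metis
      have N2nc: "x \<noteq> c" if "x \<in> N2" for x using that N2_def by simp
      have N12: "x \<notin> N1" if "x \<in> N2" for x using that N2_def by simp
      have pne: "p x \<noteq> x" if "x \<in> N2" for x using pv[OF that] N12[OF that] by metis
      have pc: "p x \<noteq> c" if "x \<in> N2" for x using pv[OF that] cN1 by metis
      have pp': "adj T x (p x)" if "x \<in> N2" for x using pv[OF that] adj_sym by metis
      show "e \<in> (\<lambda>x. {c,x}) ` N1 \<union> (\<lambda>v. {p v, v}) ` N2"
      proof -
        consider "a = c" | "b = c" | "a \<in> N1" "b \<in> N1" | "a \<in> N1" "b \<in> N2" | "a \<in> N2" "b \<in> N1" | "a \<in> N2" "b \<in> N2"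
          using inN[OF ab(3)] inN[OF ab(4)] by blast
        then show ?thesis
        proof cases
          case 1
          then have "b \<in> N1" using abj adjc[OF ab(4)] by simp
          then show ?thesis using ab 1 by blast
        next
          case 2
          then have "a \<in> N1" using bja adjc[OF ab(3)] by simp
          moreover have "e = {c,a}" using ab 2 by (simp add: insert_commute)
          ultimately show ?thesis by blast
        next
          case 3
          then show ?thesis using tree_no3[OF t N1c[OF 3(1)] abj N1c'[OF 3(2)]] by simp
        next
          case 4
          have "a = p b"
          proof (rule ccontr)
            assume ne: "a \<noteq> p b"
            show False
              by (rule tree_no4[OF t N1c[OF 4(1)] abj pp'[OF 4(2)] N1c'[of "p b"]])
                 (use pv[OF 4(2)] N2nc[OF 4(2)] ne in auto)
          qed
          then have "e = {p b, b}" using ab by simp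
          then show ?thesis using 4 by blast
        next
          case 5
          have "b = p a"
          proof (rule ccontr)
            assume ne: "b \<noteq> p a"
            show False
              by (rule tree_no4[OF t N1c[OF 5(2)] bja pp'[OF 5(1)] N1c'[of "p a"]])
                 (use pv[OF 5(1)] N2nc[OF 5(1)] ne in auto)
          qed
          then have "e = {p a, a}" using ab by (simp add: insert_commute)
          then show ?thesis using 5 by blast
        next
          case 6
          show ?thesis
          proof (cases "p a = p b")
            case True
            have "adj T b (p a)" using pp'[OF 6(2)] True by simp
            then show ?thesis using tree_no3[OF t _ abj] pv[OF 6(1)] by blast
          next
            case False
            have d: "distinct [c, p a, a, b, p b]"
              using False ab(2) pne[OF 6(1)] pne[OF 6(2)] pc[OF 6(1)] pc[OF 6(2)] N2nc[OF 6(1)] N2nc[OF 6(2)]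
                pv[OF 6(1)] pv[OF 6(2)] N12[OF 6(1)] N12[OF 6(2)] by auto
            show ?thesis
              by (rule FalseE, rule tree_no5[OF t N1c[of "p a"] _ abj pp'[OF 6(2)] N1c'[of "p b"] d])
                 (use pv[OF 6(1)] pv[OF 6(2)] in auto)
          qed
        qed
      qed
    qed
  qed
  show ?thesis
  proof (unfold_locales)
    show "finite (verts T)" by (rule finV)
    show "verts T = insert c (N1 \<union> N2)" by (rule V)
    show "c \<notin> N1" by (rule cN1)
    show "c \<notin> N2" unfolding N2_def by simp
    show "N1 \<inter> N2 = {}" unfolding N2_def by auto
    show "\<And>v. v \<in> N2 \<Longrightarrow> p v \<in> N1" using pv by blast
    show "edges T = (\<lambda>x. {c,x}) ` N1 \<union> (\<lambda>v. {p v, v}) ` N2" by (rule EE)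
  qed
qed



lemma walk_take: "walk G xs \<Longrightarrow> 0 < k \<Longrightarrow> k \<le> length xs \<Longrightarrow> walk G (take k xs)"
  unfolding walk_def by (auto dest: in_set_takeD)

lemma dist_step:
  assumes cn: "connected_graph G" and s: "simple_graph G" and c: "c \<in> verts G" and a: "adj G x y"
  shows "dist G c y \<le> dist G c x + 1"
proof -
  have xy: "x \<in> verts G" "y \<in> verts G" using adj_verts[OF s a] by auto
  obtain ys where ys: "walk G ys" "hd ys = c" "last ys = x" "length ys = Suc (dist G c x)"
    using dist_walk[OF conn_walk[OF cn c xy(1)]] by blast
  have ne: "ys \<noteq> []" using ys by auto
  have "walk G (ys @ [y])" using walk_append[OF ne, of "[y]" G] ys a xy by simp
  moreover have "hd (ys @ [y]) = c" using ys ne by simp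
  ultimately have "dist G c y \<le> length (ys @ [y]) - 1" using dist_le by fastforce
  then show ?thesis using ys by simp
qed

lemma beta2_r3:
  assumes t: "tree T" and c: "c \<in> verts T" and e3: "ecc T c \<ge> 3"
  shows "2 \<le> matching_number T"
proof -
  have s: "simple_graph T" and cn: "connected_graph T" using t unfolding tree_def by auto
  have finV: "finite (verts T)" using s unfolding simple_graph_def by simp
  have Vne: "verts T \<noteq> {}" using c by auto
  obtain w where w: "w \<in> verts T" "dist T c w = ecc T c" using ecc_attained[OF finV Vne] by blast
  define d where "d = dist T c w"
  have d3: "d \<ge> 3" using w e3 d_def by simp
  obtain xs where xs: "walk T xs" "hd xs = c" "last xs = w" "length xs = Suc d"
    using dist_walk[OF conn_walk[OF cn c w(1)]] d_def by blast
  have ne: "xs \<noteq> []" using xs by auto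
  have di: "dist T c (xs ! i) = i" if i: "i \<le> d" for i
  proof -
    have il: "i < length xs" using i xs by simp
    have "walk T (take (Suc i) xs)" using walk_take[OF xs(1)] il by simp
    moreover have "hd (take (Suc i) xs) = c" using xs ne by simp
    moreover have "last (take (Suc i) xs) = xs ! i" using il by (simp add: take_Suc_conv_app_nth)
    ultimately have up: "dist T c (xs ! i) \<le> i" using dist_le[of T "take (Suc i) xs" c "xs ! i"] il by simp
    have wd: "walk T (drop i xs)" using walk_drop[OF xs(1) il] .
    have "dist T c (last (drop i xs)) \<le> dist T c (hd (drop i xs)) + (length (drop i xs) - 1)"
      by (rule walk_potential[OF _ wd]) (rule dist_step[OF cn s c])
    moreover have "last (drop i xs) = w" using xs il by simp
    moreover have "hd (drop i xs) = xs ! i" using il by (simp add: hd_drop_conv_nth)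
    ultimately have "d \<le> dist T c (xs ! i) + (Suc d - i - 1)" using xs d_def by simp
    then show ?thesis using up i by linarith
  qed
  have d0: "dist T c (xs!0) = 0" and d1: "dist T c (xs!1) = 1" and d2: "dist T c (xs!2) = 2" and d3': "dist T c (xs!3) = 3"
    using di d3 by auto
  have W: "adj T (xs!i) (xs!Suc i)" if "i < d" for i using xs(1) xs(4) that unfolding walk_def by auto
  have a01: "adj T (xs!0) (xs!1)" using W[of 0] d3 by simp
  have a23: "adj T (xs!2) (xs!3)" using W[of 2] d3 by (simp add: eval_nat_numeral)
  have e1: "{xs!0, xs!1} \<in> edges T" using a01 unfolding adj_def by simp
  have e2: "{xs!2, xs!3} \<in> edges T" using a23 unfolding adj_def by simp
  have neq: "xs!i \<noteq> xs!j" if "i \<le> d" "j \<le> d" "i \<noteq> j" for i j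
  proof
    assume "xs!i = xs!j"
    then have "dist T c (xs!i) = dist T c (xs!j)" by simp
    then show False using di[OF that(1)] di[OF that(2)] that(3) by simp
  qed
  have "xs!0 \<noteq> xs!2" "xs!0 \<noteq> xs!3" "xs!1 \<noteq> xs!2" "xs!1 \<noteq> xs!3"
    using neq d3 by auto
  then have "{xs!0, xs!1} \<inter> {xs!2, xs!3} = {}" by auto
  then show ?thesis using matching_two[OF s e1 e2] by simp
qed

lemma xi_r3:
  assumes s: "simple_graph G" and r: "\<And>x. x \<in> verts G \<Longrightarrow> ecc G x \<ge> 3"
  shows "xi_ee G \<le> 2/3 * real (card (edges G))"
proof -
  have "xi_ee G \<le> (\<Sum>e\<in>edges G. 2/3)"
    unfolding xi_ee_def
  proof (rule sum_mono)
    fix e assume e: "e \<in> edges G"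
    obtain u v where uv: "e = {u,v}" "u \<noteq> v" "u \<in> verts G" "v \<in> verts G" using simple_edge[OF s e] by blast
    have hu: "real (ecc G u) \<ge> 3" and hv: "real (ecc G v) \<ge> 3" using r uv by auto
    have "1 / real (ecc G u) \<le> 1/3" using hu by (intro divide_left_mono) auto
    moreover have "1 / real (ecc G v) \<le> 1/3" using hv by (intro divide_left_mono) auto
    moreover have "(\<Sum>x\<in>e. 1 / real (ecc G x)) = 1 / real (ecc G u) + 1 / real (ecc G v)" using uv by simp
    ultimately show "(\<Sum>x\<in>e. 1 / real (ecc G x)) \<le> 2/3" by linarith
  qed
  then show ?thesis by simp
qed

lemma P_rhs:
  assumes s: "simple_graph T" and n: "n \<ge> 2" and le: "xi_ee T \<le> (5 * real n - 4) / 6"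
    and ex: "\<exists>a b. a + b + 2 = n \<and> graph_iso T (P_graph 2 a b)"
  shows "xi_ee T = (5 * real n - 4) / 6"
proof -
  obtain a b where ab: "a + b + 2 = n" "graph_iso T (P_graph 2 a b)" using ex by blast
  have sP: "simple_graph (P_graph 2 a b)" using dstar.simple[OF P_dstar] .
  have eq: "xi_ee (P_graph 2 a b) = xi_ee T" by (rule iso_xi[OF s sP ab(2)])
  show ?thesis
  proof (cases "a \<ge> 1 \<and> b \<ge> 1")
    case True then show ?thesis using xi_P[of a b] eq ab by simp
  next
    case False
    then have "xi_ee (P_graph 2 a b) \<ge> 3/2 * (real (a + b + 2) - 1)" by (intro xi_P_ge) auto
    then have "xi_ee T \<ge> 3/2 * (real n - 1)" using eq ab by simp
    moreover have "3/2 * (real n - 1) > (5 * real n - 4) / 6" using n by simp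
    ultimately show ?thesis using le by linarith
  qed
qed

lemma T_rhs:
  assumes s: "simple_graph T" and b: "\<beta> \<ge> 3" and n: "n \<ge> 2 * \<beta>" and iso: "graph_iso T (T_graph n \<beta>)"
  shows "xi_ee T = (10 * real n - 3 * real \<beta> - 7) / 12"
proof -
  have sT: "simple_graph (T_graph n \<beta>)" using dstar.simple[OF T_dstar] b n by simp
  show ?thesis using iso_xi[OF s sT iso] xi_T[OF b n] by simp
qed

lemma bij_insert2:
  assumes "x0 \<notin> A" "y0 \<notin> B" "bij_betw g A B"
  shows "bij_betw (\<lambda>x. if x = x0 then y0 else g x) (insert x0 A) (insert y0 B)"
proof -
  have b1: "bij_betw (\<lambda>x. if x = x0 then y0 else g x) {x0} {y0}" by (simp add: bij_betw_def)
  have "bij_betw (\<lambda>x. if x = x0 then y0 else g x) A B = bij_betw g A B"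
    by (rule bij_betw_cong) (use assms in auto)
  then have b2: "bij_betw (\<lambda>x. if x = x0 then y0 else g x) A B" using assms by simp
  have "bij_betw (\<lambda>x. if x = x0 then y0 else g x) ({x0} \<union> A) ({y0} \<union> B)"
    by (rule bij_betw_combine[OF b1 b2]) (use assms in auto)
  then show ?thesis by simp
qed



definition concl :: "'a graph \<Rightarrow> nat \<Rightarrow> nat \<Rightarrow> bool" where
  "concl T n \<beta> \<longleftrightarrow> (\<beta> = 1 \<longrightarrow> xi_ee T = xi_ee (star_graph n) \<and>
            (n \<ge> 3 \<longrightarrow> xi_ee (star_graph n) = (3 * real n - 3) / 2))
       \<and> (\<beta> = 2 \<longrightarrow> xi_ee T \<le> (5 * real n - 4) / 6 \<and>
            (xi_ee T = (5 * real n - 4) / 6 \<longleftrightarrow>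
               (\<exists>a b. a + b + 2 = n \<and> graph_iso T (P_graph 2 a b))))
       \<and> (\<beta> \<ge> 3 \<longrightarrow> xi_ee T \<le> (10 * real n - 3 * real \<beta> - 7) / 12 \<and>
            (xi_ee T = (10 * real n - 3 * real \<beta> - 7) / 12 \<longleftrightarrow> graph_iso T (T_graph n \<beta>)))"

lemma concl_ge2:
  assumes s: "simple_graph T" and b2: "\<beta> \<ge> 2" and nb: "n \<ge> 2 * \<beta>"
    and c2: "\<beta> = 2 \<Longrightarrow> xi_ee T < (5 * real n - 4) / 6"
    and c3: "\<beta> \<ge> 3 \<Longrightarrow> xi_ee T < (10 * real n - 3 * real \<beta> - 7) / 12"
  shows "concl T n \<beta>"
  unfolding concl_def
proof (intro conjI impI)
  assume "\<beta> = 1" then show "xi_ee T = xi_ee (star_graph n)" using b2 by simp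
next
  assume "\<beta> = 1" then show "3 \<le> n \<Longrightarrow> xi_ee (star_graph n) = (3 * real n - 3) / 2" using b2 by simp
next
  assume b: "\<beta> = 2"
  then show "xi_ee T \<le> (5 * real n - 4) / 6" using c2 by simp
  show "(xi_ee T = (5 * real n - 4) / 6) = (\<exists>a b. a + b + 2 = n \<and> graph_iso T (P_graph 2 a b))"
  proof
    assume "xi_ee T = (5 * real n - 4) / 6" then show "\<exists>a b. a + b + 2 = n \<and> graph_iso T (P_graph 2 a b)"
      using c2 b by simp
  next
    assume "\<exists>a b. a + b + 2 = n \<and> graph_iso T (P_graph 2 a b)"
    moreover have "xi_ee T \<le> (5 * real n - 4) / 6" using c2 b by simp
    moreover have "n \<ge> 2" using nb b by simp
    ultimately show "xi_ee T = (5 * real n - 4) / 6" using P_rhs[OF s] by blast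
  qed
next
  assume b: "\<beta> \<ge> 3"
  then show "xi_ee T \<le> (10 * real n - 3 * real \<beta> - 7) / 12" using c3 by simp
  show "(xi_ee T = (10 * real n - 3 * real \<beta> - 7) / 12) = graph_iso T (T_graph n \<beta>)"
  proof
    assume "xi_ee T = (10 * real n - 3 * real \<beta> - 7) / 12" then show "graph_iso T (T_graph n \<beta>)"
      using c3 b by simp
  next
    assume "graph_iso T (T_graph n \<beta>)"
    then show "xi_ee T = (10 * real n - 3 * real \<beta> - 7) / 12" using T_rhs[OF s b nb] by simp
  qed
qed

lemma main_r3:
  assumes t: "tree T" and r: "\<And>x. x \<in> verts T \<Longrightarrow> ecc T x \<ge> 3"
    and nd: "card (verts T) = n" and bd: "matching_number T = \<beta>" and nb: "n \<ge> 2 * \<beta>"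
  shows "concl T n \<beta>"
proof -
  have s: "simple_graph T" using t unfolding tree_def by simp
  have ne: "verts T \<noteq> {}" using t unfolding tree_def connected_graph_def by simp
  then obtain c where c: "c \<in> verts T" by auto
  have b2: "\<beta> \<ge> 2" using beta2_r3[OF t c r[OF c]] bd by simp
  have acyc: "\<not> (\<exists>xs. is_cycle T xs)" using t unfolding tree_def by simp
  have E: "card (edges T) + 1 \<le> n" using forest_edges[OF s acyc ne] nd by simp
  have xi: "xi_ee T \<le> 2/3 * real (card (edges T))" using xi_r3[OF s r] by simp
  have xi2: "xi_ee T \<le> 2/3 * (real n - 1)"
  proof -
    have "real (card (edges T)) \<le> real n - 1" using E by linarith
    then have "2/3 * real (card (edges T)) \<le> 2/3 * (real n - 1)" by (rule mult_left_mono) auto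
    then show ?thesis using xi by linarith
  qed
  show ?thesis
  proof (rule concl_ge2[OF s b2 nb])
    assume "\<beta> = 2"
    then show "xi_ee T < (5 * real n - 4) / 6" using xi2 nb by simp
  next
    assume b3: "\<beta> \<ge> 3"
    have "real n \<ge> 2 * real \<beta>" using nb by linarith
    then show "xi_ee T < (10 * real n - 3 * real \<beta> - 7) / 12" using xi2 b3 by simp
  qed
qed



lemma main_A:
  assumes d: "dstar T c N1 {} p" and ne: "N1 \<noteq> {}"
    and nd: "card (verts T) = n" and bd: "matching_number T = \<beta>"
  shows "concl T n \<beta>"
proof -
  interpret dstar T c N1 "{}" p by (rule d)
  have b1: "\<beta> \<le> 1" using beta_A bd by simp
  have nc: "n = 1 + card N1" using cardV nd by simp
  have c1: "card N1 \<ge> 1" using ne fin1 by (simp add: Suc_leI card_gt_0_iff)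
  have xT: "xi_ee T = real (card N1) * (1 + 1 / (if card N1 \<ge> 2 then 2 else 1))" using xi_A ne by simp
  have xS: "xi_ee (star_graph n) = real (n - 1) * (1 + 1 / (if n - 1 \<ge> 2 then 2 else 1))"
    using xi_star nc c1 by simp
  have eq: "xi_ee T = xi_ee (star_graph n)" using xT xS nc by simp
  have st: "n \<ge> 3 \<Longrightarrow> xi_ee (star_graph n) = (3 * real n - 3) / 2"
  proof -
    assume n3: "n \<ge> 3"
    then have "real (n - 1) = real n - 1" by (simp add: of_nat_diff)
    then show ?thesis using xS n3 by simp
  qed
  show ?thesis unfolding concl_def using eq st b1 by auto
qed

lemma main_B:
  assumes t: "tree T" and d: "dstar T c N1 N2 p" and x0: "x0 \<in> N1" and B: "\<forall>v\<in>N2. p v = x0"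
    and y: "y \<in> N1" "y \<noteq> x0" and N2: "N2 \<noteq> {}"
    and nd: "card (verts T) = n" and bd: "matching_number T = \<beta>"
  shows "concl T n \<beta>"
proof -
  interpret dstar T c N1 N2 p by (rule d)
  have nc: "n = 1 + card N1 + card N2" using cardV nd by simp
  obtain v0 where v0: "v0 \<in> N2" using N2 by auto
  have b2: "\<beta> = 2" using beta_B[OF B] beta2_B[OF y(1) x0 y(2) v0] B v0 bd by simp
  have "card N1 > 0" using x0 fin1 card_gt_0_iff by blast
  then have c1: "card N1 \<ge> 1" by simp
  have xi: "xi_ee T = (5 * real n - 4) / 6"
  proof -
    have "xi_ee T = 1 + 5/6 * (real (card N1) - 1) + 5/6 * real (card N2)" by (rule xi_B[OF x0 B y N2])
    then show ?thesis using nc by (simp add: field_simps)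
  qed
  define a where "a = card N1 - 1"
  define b where "b = card N2"
  have ab: "a + b + 2 = n" using nc c1 a_def b_def by simp
  have iso: "graph_iso T (P_graph 2 a b)"
  proof -
    have cA: "card (N1 - {x0}) = card {2..<a+2}" using x0 fin1 a_def by simp
    obtain g where g: "bij_betw g (N1 - {x0}) {2..<a+2}"
      using finite_same_card_bij[OF _ _ cA] fin1 by auto
    have b1: "bij_betw (\<lambda>x. if x = x0 then 1 else g x) (insert x0 (N1 - {x0})) (insert 1 {2..<a+2})"
      by (rule bij_insert2[OF _ _ g]) auto
    have "insert x0 (N1 - {x0}) = N1" using x0 by auto
    moreover have "insert 1 {2..<a+2} = {1..<a+2}" by auto
    ultimately have b1': "bij_betw (\<lambda>x. if x = x0 then 1 else g x) N1 {1..<a+2}" using b1 by simp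
    have cB: "card N2 = card {a+2..<a+b+2}" using b_def by simp
    obtain h where h: "bij_betw h N2 {a+2..<a+b+2}" using finite_same_card_bij[OF _ _ cB] fin2 by auto
    show ?thesis
      by (rule dstar_iso[OF d P_dstar b1' h]) (use B in simp)
  qed
  show ?thesis unfolding concl_def using b2 xi iso ab by auto
qed

lemma main_C:
  assumes t: "tree T" and d: "dstar T c N1 N2 p" and v: "v1 \<in> N2" "v2 \<in> N2" "p v1 \<noteq> p v2"
    and nd: "card (verts T) = n" and bd: "matching_number T = \<beta>" and nb: "n \<ge> 2 * \<beta>"
  shows "concl T n \<beta>"
proof -
  interpret dstar T c N1 N2 p by (rule d)
  have s: "simple_graph T" by (rule simple)
  have nc: "n = 1 + card N1 + card N2" using cardV nd by simp
  have b2: "\<beta> \<ge> 2" using beta2_C[OF v] bd by simp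
  have xi: "xi_ee T = 5/6 * real (card N1) + 7/12 * real (card N2)" by (rule xi_C[OF v])
  have bK: "\<beta> \<le> card (p ` N2) + 1" using beta_K bd by simp
  have Km: "card (p ` N2) \<le> card N2" using fin2 card_image_le by blast
  have bm: "\<beta> \<le> card N2 + 1" using bK Km by linarith
  have nr: "real n = 1 + real (card N1) + real (card N2)" using nc by simp
  show ?thesis unfolding concl_def
  proof (intro conjI impI)
    assume "\<beta> = 1" then show "xi_ee T = xi_ee (star_graph n)" using b2 by simp
  next
    assume "\<beta> = 1" then show "3 \<le> n \<Longrightarrow> xi_ee (star_graph n) = (3 * real n - 3) / 2" using b2 by simp
  next
    assume b: "\<beta> = 2"
    have lt: "xi_ee T < (5 * real n - 4) / 6" using xi nr by simp
    then show "xi_ee T \<le> (5 * real n - 4) / 6" by simp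
    show "(xi_ee T = (5 * real n - 4) / 6) = (\<exists>a b. a + b + 2 = n \<and> graph_iso T (P_graph 2 a b))"
    proof
      assume "xi_ee T = (5 * real n - 4) / 6" then show "\<exists>a b. a + b + 2 = n \<and> graph_iso T (P_graph 2 a b)"
        using lt by simp
    next
      assume H: "\<exists>a b. a + b + 2 = n \<and> graph_iso T (P_graph 2 a b)"
      have "n \<ge> 2" using nb b by simp
      then have "xi_ee T = (5 * real n - 4) / 6" using P_rhs[OF s _ _ H] lt by simp
      then show "xi_ee T = (5 * real n - 4) / 6" .
    qed
  next
    assume b3: "\<beta> \<ge> 3"
    have bmr: "real \<beta> \<le> real (card N2) + 1" using bm by linarith
    show "xi_ee T \<le> (10 * real n - 3 * real \<beta> - 7) / 12" using xi nr bmr by simp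
    show "(xi_ee T = (10 * real n - 3 * real \<beta> - 7) / 12) = graph_iso T (T_graph n \<beta>)"
    proof
      assume "graph_iso T (T_graph n \<beta>)"
      then show "xi_ee T = (10 * real n - 3 * real \<beta> - 7) / 12" using T_rhs[OF s b3 nb] by simp
    next
      assume eqx: "xi_ee T = (10 * real n - 3 * real \<beta> - 7) / 12"
      define m where "m = card N2"
      have "real \<beta> = real m + 1" using eqx xi nr m_def by simp
      then have bm1: "\<beta> = m + 1" by linarith
      have cK: "card (p ` N2) = m" using bK Km bm1 m_def by linarith
      have injp: "inj_on p N2" using eq_card_imp_inj_on[OF fin2] cK m_def by simp
      have bp: "bij_betw p N2 (p ` N2)" using injp by (simp add: bij_betw_def)
      have KN1: "p ` N2 \<subseteq> N1" using pN1 by auto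
      define L where "L = N1 - p ` N2"
      define k where "k = n - \<beta>"
      have k: "n = k + \<beta>" using nb k_def by simp
      have cN1m: "card N1 = k + \<beta> - 1 - m" using nc k m_def by simp
      have cL: "card L = k - m" unfolding L_def using card_Diff_subset[OF finite_imageI[OF fin2] KN1] cK cN1m bm1
        by simp
      let ?p' = "\<lambda>v. v - (n - \<beta>)"
      have dT: "dstar (T_graph n \<beta>) 0 {1..n-\<beta>} {n-\<beta>+1..<n} ?p'" using T_dstar b3 nb by simp
      have cN2': "card N2 = card {n-\<beta>+1..<n}" using m_def bm1 k by simp
      obtain f2 where f2: "bij_betw f2 N2 {n-\<beta>+1..<n}" using finite_same_card_bij[OF _ _ cN2'] fin2 by auto
      have bp': "bij_betw ?p' {n-\<beta>+1..<n} {1..<\<beta>}"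
      proof -
        have "inj_on ?p' {n-\<beta>+1..<n}" by (auto simp: inj_on_def)
        moreover have "?p' ` {n-\<beta>+1..<n} = {1..<\<beta>}"
          using k b3 by (simp add: image_minus_const_atLeastLessThan_nat)
        ultimately show ?thesis by (simp add: bij_betw_def)
      qed
      define gK where "gK = (\<lambda>x. ?p' (f2 (inv_into N2 p x)))"
      have bgK: "bij_betw gK (p ` N2) {1..<\<beta>}"
      proof -
        have "bij_betw (inv_into N2 p) (p ` N2) N2" by (rule bij_betw_inv_into[OF bp])
        then have "bij_betw (f2 \<circ> inv_into N2 p) (p ` N2) {n-\<beta>+1..<n}" using f2 by (rule bij_betw_trans)
        then have "bij_betw (?p' \<circ> (f2 \<circ> inv_into N2 p)) (p ` N2) {1..<\<beta>}" using bp' by (rule bij_betw_trans)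
        then show ?thesis unfolding gK_def comp_def .
      qed
      have cL': "card L = card {\<beta>..n-\<beta>}" using cL k bm1 by simp
      obtain gL where gL: "bij_betw gL L {\<beta>..n-\<beta>}"
        using finite_same_card_bij[OF _ _ cL'] fin1 L_def by auto
      have b1: "bij_betw (\<lambda>x. if x \<in> p ` N2 then gK x else gL x) (p ` N2 \<union> L) ({1..<\<beta>} \<union> {\<beta>..n-\<beta>})"
        by (rule bij_betw_disjoint_Un[OF bgK gL]) (auto simp: L_def)
      have "p ` N2 \<union> L = N1" using KN1 L_def by auto
      moreover have "{1..<\<beta>} \<union> {\<beta>..n-\<beta>} = {1..n-\<beta>}" using k b3 bm1 nb by auto
      ultimately have b1': "bij_betw (\<lambda>x. if x \<in> p ` N2 then gK x else gL x) N1 {1..n-\<beta>}" using b1 by simp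
      show "graph_iso T (T_graph n \<beta>)"
      proof (rule dstar_iso[OF d dT b1' f2])
        fix v assume vN: "v \<in> N2"
        have "inv_into N2 p (p v) = v" using injp vN by simp
        then show "?p' (f2 v) = (if p v \<in> p ` N2 then gK (p v) else gL (p v))"
          using vN unfolding gK_def by simp
      qed
    qed
  qed
qed



theorem theorem4p2:
  fixes T :: "'a graph" and n \<beta> :: nat
  assumes "tree T" and "card (verts T) = n" and "matching_number T = \<beta>" and "n \<ge> 2 * \<beta>"
  shows "(\<beta> = 1 \<longrightarrow> xi_ee T = xi_ee (star_graph n) \<and>
            (n \<ge> 3 \<longrightarrow> xi_ee (star_graph n) = (3 * real n - 3) / 2))
       \<and> (\<beta> = 2 \<longrightarrow> xi_ee T \<le> (5 * real n - 4) / 6 \<and>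
            (xi_ee T = (5 * real n - 4) / 6 \<longleftrightarrow>
               (\<exists>a b. a + b + 2 = n \<and> graph_iso T (P_graph 2 a b))))
       \<and> (\<beta> \<ge> 3 \<longrightarrow> xi_ee T \<le> (10 * real n - 3 * real \<beta> - 7) / 12 \<and>
            (xi_ee T = (10 * real n - 3 * real \<beta> - 7) / 12 \<longleftrightarrow> graph_iso T (T_graph n \<beta>)))"
proof -
  note t = assms(1) and nd = assms(2) and bd = assms(3) and nb = assms(4)
  have s: "simple_graph T" using t unfolding tree_def by simp
  have finV: "finite (verts T)" using s unfolding simple_graph_def by simp
  have ne: "verts T \<noteq> {}" using t unfolding tree_def connected_graph_def by simp
  define r where "r = Min (ecc T ` verts T)"
  have "r \<in> ecc T ` verts T" unfolding r_def using finV ne by (intro Min_in) auto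
  then obtain c where c: "c \<in> verts T" "ecc T c = r" by auto
  have mn: "ecc T c \<le> ecc T x" if "x \<in> verts T" for x
  proof -
    have "Min (ecc T ` verts T) \<le> ecc T x" using that finV by (intro Min_le) auto
    then show ?thesis using c(2) unfolding r_def by simp
  qed
  have "concl T n \<beta>"
  proof (cases "ecc T c \<le> 2")
    case False
    then show ?thesis using main_r3[OF t _ nd bd nb] mn by fastforce
  next
    case True
    obtain N1 N2 p where d: "dstar T c N1 N2 p" using tree_dstar[OF t c(1) True] by blast
    interpret dstar T c N1 N2 p by (rule d)
    show ?thesis
    proof (cases "N1 = {}")
      case True
      then have "\<beta> = 0" using beta_0 bd by simp
      then show ?thesis unfolding concl_def by simp
    next
      case N1: False
      show ?thesis
      proof (cases "N2 = {}")
        case True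
        show ?thesis using main_A[of T c N1 p] d True N1 nd bd by simp
      next
        case N2: False
        show ?thesis
        proof (cases "\<exists>v1\<in>N2. \<exists>v2\<in>N2. p v1 \<noteq> p v2")
          case True
          then obtain v1 v2 where v: "v1 \<in> N2" "v2 \<in> N2" "p v1 \<noteq> p v2" by blast
          show ?thesis by (rule main_C[OF t d v nd bd nb])
        next
          case False
          obtain v0 where v0: "v0 \<in> N2" using N2 by auto
          define x0 where "x0 = p v0"
          have B: "\<forall>v\<in>N2. p v = x0" using False v0 x0_def by blast
          have x0: "x0 \<in> N1" using pN1 v0 x0_def by simp
          show ?thesis
          proof (cases "N1 = {x0}")
            case True
            have "ecc T x0 \<le> 1" by (rule ecc_x0_B'[OF x0 B True])
            moreover have "ecc T c = 2" by (rule ecc_c_N2[OF N2])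
            moreover have "ecc T c \<le> ecc T x0" using mn N1V[OF x0] by simp
            ultimately show ?thesis by simp
          next
            case False
            then obtain y where y: "y \<in> N1" "y \<noteq> x0" using x0 by blast
            show ?thesis by (rule main_B[OF t d x0 B y N2 nd bd])
          qed
        qed
      qed
    qed
  qed
  then show ?thesis unfolding concl_def .
qed



end
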